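(* Let $(M(t),Z(t))$ be the solution of $\mathrm{d}M(t)=Z(t)\,\mathrm{d}t$, $\mathrm{d}Z(t)=-Z(t)\,\mathrm{d}t+\mathrm{d}W(t)$, with $W$ a standard one-dimensional Wiener process and $M$ regarded modulo $2\pi$. Then for any nonzero integers $k,\ell$, \[ \langle e^{i\ell m},e^{ikm}\rangle_{M,Z}=e^{k^2/2}\,\delta_{k\ell}\sum_{n=0}^\infty\frac{(-1)^nk^{2n}}{(n+k^2/2)\,2^n\,n!}, \] which for $k=\ell=1$ becomes $\langle e^{im},e^{im}\rangle_{M,Z}=\sqrt{2e\pi}\,\mathrm{erf}\big(\tfrac1{\sqrt2}\big)$.
   Context: $A_{M,Z}:=\frac12\partial_z^2-z\partial_z+z\partial_m$ is the generator of $(M,Z)$ on functions of $(m,z)\in(\mathbb{R}/2\pi\mathbb{Z})\times\mathbb{R}$. For $k\ne0$, $A_{M,Z}^{-1}e^{ikm}$ denotes the function $g_k(z)e^{ikm}$ with $g_k\in L^2(\mathbb{R},e^{-z^2}\mathrm{d}z)$ satisfying $A_{M,Z}(g_ke^{ikm})=e^{ikm}$. The form is $\langle\varphi_1,\varphi_2\rangle_{M,Z}:=-\int_{\mathbb{R}}\int_0^{2\pi}\varphi_1^*(m)\,(A_{M,Z}^{-1}\varphi_2)(m,z)\,\frac{1}{2\pi}\frac{e^{-z^2}}{\sqrt\pi}\,\mathrm{d}m\,\mathrm{d}z$. $\delta_{k\ell}$ is the Kronecker delta. *)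

theory Defs
  imports "HOL-Analysis.Analysis"
begin

definition pz :: "(real \<Rightarrow> real \<Rightarrow> complex) \<Rightarrow> real \<Rightarrow> real \<Rightarrow> complex" where
  "pz f m z = vector_derivative (\<lambda>w. f m w) (at z)"

definition pm :: "(real \<Rightarrow> real \<Rightarrow> complex) \<Rightarrow> real \<Rightarrow> real \<Rightarrow> complex" where
  "pm f m z = vector_derivative (\<lambda>u. f u z) (at m)"

definition AMZ :: "(real \<Rightarrow> real \<Rightarrow> complex) \<Rightarrow> real \<Rightarrow> real \<Rightarrow> complex" where
  "AMZ f m z = (1/2) * pz (pz f) m z - complex_of_real z * pz f m z
                + complex_of_real z * pm f m z"

definition admissible_profile :: "(real \<Rightarrow> complex) \<Rightarrow> bool" where
  "admissible_profile g \<longleftrightarrow>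
     (\<exists>g'. (\<forall>z. (g has_vector_derivative g' z) (at z))
         \<and> (\<forall>z. g' differentiable (at z)))
     \<and> integrable lborel (\<lambda>z. (cmod (g z))\<^sup>2 * exp (- z\<^sup>2))"

definition AMZ_inv_exp :: "int \<Rightarrow> real \<Rightarrow> real \<Rightarrow> complex" where
  "AMZ_inv_exp k = (THE h. \<exists>g. admissible_profile g
       \<and> h = (\<lambda>m z. g z * exp (\<i> * of_int k * of_real m))
       \<and> (\<forall>m z. AMZ h m z = exp (\<i> * of_int k * of_real m)))"

definition MZ_form_exp :: "int \<Rightarrow> int \<Rightarrow> complex" where
  "MZ_form_exp l k = - (LINT z|lborel. (LBINT m=0..2*pi.
       cnj (exp (\<i> * of_int l * of_real m)) * AMZ_inv_exp k m z
       * of_real (1 / (2*pi) * exp (- z\<^sup>2) / sqrt pi)))"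

definition erf :: "real \<Rightarrow> real" where
  "erf x = 2 / sqrt pi * (LBINT t=0..x. exp (- t\<^sup>2))"

end

theory Submission
  imports Defs "HOL-Probability.Probability" "HOL-Real_Asymp.Real_Asymp"
begin

lemma mvt_vec_bound:
  fixes F :: "real \<Rightarrow> 'b::real_normed_vector"
  assumes der: "\<And>x. (F has_vector_derivative F' x) (at x)"
    and bd: "\<And>x. norm (F' x) \<le> B"
  shows "norm (F y - F x) \<le> B * norm (y - x)"
proof (rule differentiable_bound[where S=UNIV and f'="\<lambda>x h. h *\<^sub>R F' x"])
  show "(F has_derivative (\<lambda>h. h *\<^sub>R F' x)) (at x within UNIV)" for x
    using der[of x] by (simp add: has_vector_derivative_def)
  show "onorm (\<lambda>h. h *\<^sub>R F' x) \<le> B" for x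
    using bd[of x] onorm_scaleR_left[OF bounded_linear_ident, of "F' x"]
    by (simp add: onorm_id)
qed auto

lemma deriv_integral:
  fixes f f' :: "real \<Rightarrow> 'a \<Rightarrow> complex" and w :: "'a \<Rightarrow> real"
  assumes meas: "\<And>z. f z \<in> borel_measurable M" "\<And>z. f' z \<in> borel_measurable M"
    and int: "\<And>z. integrable M (f z)"
    and w: "integrable M w"
    and der: "\<And>z t. t \<in> space M \<Longrightarrow> ((\<lambda>z. f z t) has_vector_derivative f' z t) (at z)"
    and bd: "\<And>z t. t \<in> space M \<Longrightarrow> norm (f' z t) \<le> w t"
  shows "((\<lambda>z. integral\<^sup>L M (f z)) has_vector_derivative integral\<^sup>L M (f' z)) (at z)"
proof -
  have int': "integrable M (f' y)" for y
    by (rule Bochner_Integration.integrable_bound[OF w meas(2)]) (use bd in \<open>auto intro!: AE_I2 intro: order_trans[OF _ abs_ge_self]\<close>)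
  define D where "D h t = norm (f (z+h) t - f z t - h *\<^sub>R f' z t) / norm h" for h t
  have Dmeas: "D h \<in> borel_measurable M" for h unfolding D_def using meas by measurable
  have Dbd: "norm (D h t) \<le> 2 * w t" if "t \<in> space M" for h t
  proof (cases "h = 0")
    case True
    have "0 \<le> w t" using bd[OF that, of z] by (smt (verit) norm_ge_zero)
    then show ?thesis using True by (simp add: D_def)
  next
    case False
    have "norm (f (z+h) t - f z t) \<le> w t * norm ((z+h) - z)"
      by (rule mvt_vec_bound[where F="\<lambda>z. f z t" and F'="\<lambda>z. f' z t"]) (use der bd that in auto)
    moreover have "norm (h *\<^sub>R f' z t) \<le> norm h * w t" using bd[OF that, of z] by (simp add: mult_left_mono)
    ultimately have "norm (f (z+h) t - f z t - h *\<^sub>R f' z t) \<le> 2 * w t * norm h"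
      using norm_triangle_ineq4[of "f (z+h) t - f z t" "h *\<^sub>R f' z t"] by (simp add: algebra_simps)
    then show ?thesis using False by (simp add: D_def divide_le_eq mult.commute)
  qed
  have Dlim: "((\<lambda>h. D h t) \<longlongrightarrow> 0) (at 0)" if "t \<in> space M" for t
    using der[OF that, of z] unfolding has_vector_derivative_def has_derivative_at D_def by simp
  have intlim: "((\<lambda>h. integral\<^sup>L M (D h)) \<longlongrightarrow> 0) (at 0)"
    unfolding tendsto_at_iff_sequentially o_def
  proof (intro allI impI)
    fix X :: "nat \<Rightarrow> real" assume X: "\<forall>i. X i \<in> UNIV - {0}" "X \<longlonglongrightarrow> 0"
    have "(\<lambda>n. integral\<^sup>L M (D (X n))) \<longlonglongrightarrow> integral\<^sup>L M (\<lambda>t. 0)"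
    proof (rule integral_dominated_convergence[where w="\<lambda>t. 2 * w t"])
      show "(\<lambda>t. 0::real) \<in> borel_measurable M" by simp
      show "D (X n) \<in> borel_measurable M" for n by (rule Dmeas)
      show "integrable M (\<lambda>t. 2 * w t)" using w by simp
      show "AE t in M. (\<lambda>n. D (X n) t) \<longlonglongrightarrow> 0"
      proof (rule AE_I2)
        fix t assume t: "t \<in> space M"
        show "(\<lambda>n. D (X n) t) \<longlonglongrightarrow> 0"
          using Dlim[OF t] X unfolding tendsto_at_iff_sequentially o_def by auto
      qed
      show "AE t in M. norm (D (X n) t) \<le> 2 * w t" for n using Dbd by (auto intro!: AE_I2)
    qed
    then show "(\<lambda>n. integral\<^sup>L M (D (X n))) \<longlonglongrightarrow> 0" by simp
  qed
  have "((\<lambda>h. norm (integral\<^sup>L M (f (z+h)) - integral\<^sup>L M (f z) - h *\<^sub>R integral\<^sup>L M (f' z)) / norm h) \<longlongrightarrow> 0) (at 0)"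
  proof (rule tendsto_sandwich[OF _ _ tendsto_const intlim])
    show "\<forall>\<^sub>F h in at 0. 0 \<le> norm (integral\<^sup>L M (f (z+h)) - integral\<^sup>L M (f z) - h *\<^sub>R integral\<^sup>L M (f' z)) / norm h"
      by simp
    show "\<forall>\<^sub>F h in at 0. norm (integral\<^sup>L M (f (z+h)) - integral\<^sup>L M (f z) - h *\<^sub>R integral\<^sup>L M (f' z)) / norm h \<le> integral\<^sup>L M (D h)"
    proof (rule always_eventually, rule allI)
      fix h :: real
      have "integral\<^sup>L M (f (z+h)) - integral\<^sup>L M (f z) - h *\<^sub>R integral\<^sup>L M (f' z)
            = integral\<^sup>L M (\<lambda>t. f (z+h) t - f z t - h *\<^sub>R f' z t)"
        using int int' by simp
      also have "norm \<dots> \<le> integral\<^sup>L M (\<lambda>t. norm (f (z+h) t - f z t - h *\<^sub>R f' z t))"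
        by (rule integral_norm_bound)
      finally have "norm (integral\<^sup>L M (f (z+h)) - integral\<^sup>L M (f z) - h *\<^sub>R integral\<^sup>L M (f' z))
           / norm h \<le> integral\<^sup>L M (\<lambda>t. norm (f (z+h) t - f z t - h *\<^sub>R f' z t)) / norm h"
        by (simp add: divide_right_mono)
      also have "\<dots> = integral\<^sup>L M (D h)" unfolding D_def by simp
      finally show "norm (integral\<^sup>L M (f (z+h)) - integral\<^sup>L M (f z) - h *\<^sub>R integral\<^sup>L M (f' z)) / norm h \<le> integral\<^sup>L M (D h)" .
    qed
  qed
  then show ?thesis
    unfolding has_vector_derivative_def has_derivative_at by (simp add: bounded_linear_scaleR_left)
qed

lemma gauss_eq: "exp (- (x::real)\<^sup>2) = sqrt pi * normal_density 0 (sqrt (1/2)) x"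
proof -
  have s: "(1 / sqrt 2)\<^sup>2 = (1/2::real)" by (simp add: power_divide)
  show ?thesis by (simp add: normal_density_def real_sqrt_divide s)
qed

lemma integrable_gauss: "integrable lborel (\<lambda>x::real. exp (- x\<^sup>2))"
  unfolding gauss_eq by simp

lemma integral_gauss: "(LINT x|lborel. exp (- x\<^sup>2)) = sqrt pi"
  unfolding gauss_eq by simp

lemma not_integrable_inv:
  assumes a: "a \<ge> 1" and c: "c > 0"
  shows "\<not> integrable lborel (\<lambda>z::real. indicator {a..} z * (c / z))"
proof
  assume I: "integrable lborel (\<lambda>z::real. indicator {a..} z * (c / z))"
  define T where "T = (LINT z|lborel. indicator {a..} z * (c / z))"
  define b where "b = exp (T / c + ln a + 1)"
  have b: "b \<ge> a" unfolding b_def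
  proof -
    have "T \<ge> 0" unfolding T_def using a c by (intro integral_nonneg_AE AE_I2) (auto simp: indicator_def)
    then have "T / c + ln a + 1 \<ge> ln a" using c by simp
    then show "a \<le> exp (T / c + ln a + 1)" using a
      by (metis exp_le_cancel_iff exp_ln less_le_trans zero_less_one)
  qed
  have "(LBINT z=a..b. c / z) = c * ln b - c * ln a"
  proof (rule interval_integral_FTC_finite)
    show "continuous_on {min a b..max a b} (\<lambda>z. c / z)" using a b
      by (intro continuous_intros) auto
    fix x assume "min a b \<le> x" "x \<le> max a b"
    then have "x > 0" using a b by auto
    then show "((\<lambda>z. c * ln z) has_vector_derivative c / x) (at x within {min a b..max a b})"
      by (auto intro!: derivative_eq_intros simp: has_real_derivative_iff_has_vector_derivative[symmetric])
  qed
  also have "\<dots> = T + c"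
    unfolding b_def using c by (simp add: algebra_simps)
  finally have E: "(LBINT z=a..b. c / z) = T + c" .
  have "(LBINT z=a..b. c / z) = (LINT z|lborel. indicator {a..b} z * (c / z))"
    using b by (simp add: interval_integral_Icc set_lebesgue_integral_def)
  also have "\<dots> \<le> T" unfolding T_def
  proof (rule integral_mono[OF _ I])
    show "integrable lborel (\<lambda>z. indicator {a..b} z * (c / z))"
      by (rule Bochner_Integration.integrable_bound[OF I]) (use a c in \<open>auto simp: indicator_def\<close>)
    show "indicator {a..b} x * (c / x) \<le> indicator {a..} x * (c / x)" for x
      using a c by (auto simp: indicator_def)
  qed
  finally show False using E c by simp
qed

lemma F_nonpos:
  fixes u v u1 v1 u2 v2 :: "real \<Rightarrow> real" and \<kappa> :: real
  assumes du: "\<And>z. (u has_real_derivative u1 z) (at z)"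
    and dv: "\<And>z. (v has_real_derivative v1 z) (at z)"
    and du1: "\<And>z. (u1 has_real_derivative u2 z) (at z)"
    and dv1: "\<And>z. (v1 has_real_derivative v2 z) (at z)"
    and ode1: "\<And>z. u2 z = 2 * z * u1 z + 2 * \<kappa> * z * v z"
    and ode2: "\<And>z. v2 z = 2 * z * v1 z - 2 * \<kappa> * z * u z"
    and L2: "integrable lborel (\<lambda>z. ((u z)\<^sup>2 + (v z)\<^sup>2) * exp (- z\<^sup>2))"
  shows "u1 z0 * u z0 + v1 z0 * v z0 \<le> 0"
proof (rule ccontr)
  assume "\<not> ?thesis"
  then have P0: "u1 z0 * u z0 + v1 z0 * v z0 > 0" by simp
  define F where "F z = (u1 z * u z + v1 z * v z) * exp (- z\<^sup>2)" for z
  have dF: "(F has_real_derivative ((u1 z)\<^sup>2 + (v1 z)\<^sup>2) * exp (- z\<^sup>2)) (at z)" for z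
  proof -
    have "(F has_real_derivative ((u2 z * u z + u1 z * u1 z + (v2 z * v z + v1 z * v1 z)) * exp (- z\<^sup>2)
           + (u1 z * u z + v1 z * v z) * (exp (- z\<^sup>2) * (- (2 * z))))) (at z)"
      unfolding F_def
      by (auto intro!: derivative_eq_intros du dv du1 dv1 simp: power2_eq_square)
    moreover have "(u2 z * u z + u1 z * u1 z + (v2 z * v z + v1 z * v1 z)) * exp (- z\<^sup>2)
           + (u1 z * u z + v1 z * v z) * (exp (- z\<^sup>2) * (- (2 * z))) = ((u1 z)\<^sup>2 + (v1 z)\<^sup>2) * exp (- z\<^sup>2)"
      unfolding ode1 ode2 by (simp add: algebra_simps power2_eq_square)
    ultimately show ?thesis by simp
  qed
  define c where "c = F z0"
  have c: "c > 0" unfolding c_def F_def using P0 by simp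
  define z1 where "z1 = max z0 1"
  have Fmono: "F z \<ge> c" if "z \<ge> z0" for z
    unfolding c_def
  proof (rule DERIV_nonneg_imp_nondecreasing[OF that])
    fix x show "\<exists>y. (F has_real_derivative y) (at x) \<and> 0 \<le> y"
      by (rule exI[of _ "((u1 x)\<^sup>2 + (v1 x)\<^sup>2) * exp (- x\<^sup>2)"]) (use dF in auto)
  qed
  define \<psi> where "\<psi> z = ((u z)\<^sup>2 + (v z)\<^sup>2) - c * exp (z\<^sup>2) / z" for z
  have d\<psi>: "(\<psi> has_real_derivative 2 * (u z * u1 z + v z * v1 z) - c * (exp (z\<^sup>2) * (2 * z) * z - exp (z\<^sup>2)) / z\<^sup>2) (at z)"
    if "z > 0" for z
    unfolding \<psi>_def using that
    by (auto intro!: derivative_eq_intros du dv simp: power2_eq_square field_simps)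
  have \<psi>mono: "\<psi> z \<ge> \<psi> z1" if "z \<ge> z1" for z
  proof (rule DERIV_nonneg_imp_nondecreasing[OF that])
    fix x assume x: "z1 \<le> x" "x \<le> z"
    then have x1: "x \<ge> 1" "x \<ge> z0" unfolding z1_def by auto
    have "F x \<ge> c" using Fmono x1 by simp
    then have P: "(u1 x * u x + v1 x * v x) \<ge> c * exp (x\<^sup>2)"
      unfolding F_def by (simp add: exp_minus field_simps)
    have "c * (exp (x\<^sup>2) * (2 * x) * x - exp (x\<^sup>2)) / x\<^sup>2 \<le> 2 * (c * exp (x\<^sup>2))"
    proof -
      have "c * (exp (x\<^sup>2) * (2 * x) * x - exp (x\<^sup>2)) \<le> 2 * (c * exp (x\<^sup>2)) * x\<^sup>2"
        using c by (simp add: algebra_simps power2_eq_square)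
      then show ?thesis using x1 by (simp add: divide_le_eq)
    qed
    then have "0 \<le> 2 * (u x * u1 x + v x * v1 x) - c * (exp (x\<^sup>2) * (2 * x) * x - exp (x\<^sup>2)) / x\<^sup>2"
      using P by (simp add: algebra_simps)
    then show "\<exists>y. (\<psi> has_real_derivative y) (at x) \<and> 0 \<le> y"
      using d\<psi>[of x] x1 by auto
  qed
  define K where "K = \<bar>\<psi> z1\<bar>"
  have bound: "norm (indicator {z1..} z * (c / z)) \<le> norm (((u z)\<^sup>2 + (v z)\<^sup>2) * exp (- z\<^sup>2) + K * exp (- z\<^sup>2))" for z
  proof (cases "z \<ge> z1")
    case True
    then have z: "z \<ge> 1" unfolding z1_def by auto
    have "\<psi> z \<ge> - K" using \<psi>mono[OF True] unfolding K_def by simp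
    then have "(u z)\<^sup>2 + (v z)\<^sup>2 + K \<ge> c * exp (z\<^sup>2) / z" unfolding \<psi>_def by simp
    then have "((u z)\<^sup>2 + (v z)\<^sup>2 + K) * exp (- z\<^sup>2) \<ge> c * exp (z\<^sup>2) / z * exp (- z\<^sup>2)"
      by (intro mult_right_mono) auto
    also have "c * exp (z\<^sup>2) / z * exp (- z\<^sup>2) = c / z" by (simp add: exp_minus field_simps)
    finally have "((u z)\<^sup>2 + (v z)\<^sup>2 + K) * exp (- z\<^sup>2) \<ge> c / z" .
    moreover have "c / z \<ge> 0" using c z by simp
    ultimately show ?thesis using True by (simp add: algebra_simps)
  next
    case False
    have "0 \<le> ((u z)\<^sup>2 + (v z)\<^sup>2) * exp (- z\<^sup>2) + K * exp (- z\<^sup>2)"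
      unfolding K_def by (intro add_nonneg_nonneg mult_nonneg_nonneg) auto
    then show ?thesis using False by simp
  qed
  have "integrable lborel (\<lambda>z. ((u z)\<^sup>2 + (v z)\<^sup>2) * exp (- z\<^sup>2) + K * exp (- z\<^sup>2))"
    using L2 integrable_gauss by simp
  then have "integrable lborel (\<lambda>z::real. indicator {z1..} z * (c / z))"
    by (rule Bochner_Integration.integrable_bound) (use bound in auto)
  then show False using not_integrable_inv[of z1 c] c unfolding z1_def by simp
qed

lemma homog_zero:
  fixes g g1 g2 :: "real \<Rightarrow> complex" and \<kappa> :: real
  assumes k: "\<kappa> \<noteq> 0"
    and d1: "\<And>z. (g has_vector_derivative g1 z) (at z)"
    and d2: "\<And>z. (g1 has_vector_derivative g2 z) (at z)"
    and ode: "\<And>z. g2 z / 2 - of_real z * g1 z + \<i> * of_real \<kappa> * of_real z * g z = 0"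
    and L2: "integrable lborel (\<lambda>z. (cmod (g z))\<^sup>2 * exp (- z\<^sup>2))"
  shows "g z = 0"
proof -
  define u where "u z = Re (g z)" for z
  define v where "v z = Im (g z)" for z
  define u1 where "u1 z = Re (g1 z)" for z
  define v1 where "v1 z = Im (g1 z)" for z
  define u2 where "u2 z = Re (g2 z)" for z
  define v2 where "v2 z = Im (g2 z)" for z
  have du: "(u has_real_derivative u1 z) (at z)" and dv: "(v has_real_derivative v1 z) (at z)" for z
    using d1[of z] unfolding has_vector_derivative_complex_iff u_def v_def u1_def v1_def by auto
  have du1: "(u1 has_real_derivative u2 z) (at z)" and dv1: "(v1 has_real_derivative v2 z) (at z)" for z
    using d2[of z] unfolding has_vector_derivative_complex_iff u2_def v2_def u1_def v1_def by auto
  have g2eq: "g2 z = 2 * of_real z * g1 z - 2 * \<i> * of_real \<kappa> * of_real z * g z" for z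
    using ode[of z] by (simp add: algebra_simps field_simps)
  have ode1: "u2 z = 2 * z * u1 z + 2 * \<kappa> * z * v z" and ode2: "v2 z = 2 * z * v1 z - 2 * \<kappa> * z * u z" for z
    unfolding u2_def v2_def u1_def v1_def u_def v_def g2eq by simp_all
  have L2': "integrable lborel (\<lambda>z. ((u z)\<^sup>2 + (v z)\<^sup>2) * exp (- z\<^sup>2))"
    using L2 unfolding u_def v_def by (simp add: cmod_power2)
  have P1: "u1 z * u z + v1 z * v z \<le> 0" for z
    by (rule F_nonpos[OF du dv du1 dv1 ode1 ode2 L2'])
  have P2: "(- u1 (- z)) * u (- z) + (- v1 (- z)) * v (- z) \<le> 0" for z
  proof (rule F_nonpos[of "\<lambda>z. u (- z)" "\<lambda>z. - u1 (- z)" "\<lambda>z. v (- z)" "\<lambda>z. - v1 (- z)" "\<lambda>z. u2 (- z)" "\<lambda>z. v2 (- z)" "- \<kappa>"])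
    show "((\<lambda>z. u (- z)) has_real_derivative - u1 (- z)) (at z)" for z
      using DERIV_chain2[OF du[of "-z"] DERIV_minus[OF DERIV_ident]] by simp
    show "((\<lambda>z. v (- z)) has_real_derivative - v1 (- z)) (at z)" for z
      using DERIV_chain2[OF dv[of "-z"] DERIV_minus[OF DERIV_ident]] by simp
    show "((\<lambda>z. - u1 (- z)) has_real_derivative u2 (- z)) (at z)" for z
      using DERIV_minus[OF DERIV_chain2[OF du1[of "-z"] DERIV_minus[OF DERIV_ident]]] by simp
    show "((\<lambda>z. - v1 (- z)) has_real_derivative v2 (- z)) (at z)" for z
      using DERIV_minus[OF DERIV_chain2[OF dv1[of "-z"] DERIV_minus[OF DERIV_ident]]] by simp
    show "u2 (- z) = 2 * z * - u1 (- z) + 2 * - \<kappa> * z * v (- z)" for z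
      using ode1[of "-z"] by simp
    show "v2 (- z) = 2 * z * - v1 (- z) - 2 * - \<kappa> * z * u (- z)" for z
      using ode2[of "-z"] by simp
    show "integrable lborel (\<lambda>z. ((u (- z))\<^sup>2 + (v (- z))\<^sup>2) * exp (- z\<^sup>2))"
      using lborel_integrable_real_affine[OF L2', of "-1" 0] by simp
  qed
  have P0: "u1 z * u z + v1 z * v z = 0" for z
    using P1[of z] P2[of "-z"] by simp
  have dP: "((\<lambda>z. u1 z * u z + v1 z * v z) has_real_derivative (u1 z)\<^sup>2 + (v1 z)\<^sup>2) (at z)" for z
  proof -
    have "((\<lambda>z. u1 z * u z + v1 z * v z) has_real_derivative u2 z * u z + u1 z * u1 z + (v2 z * v z + v1 z * v1 z)) (at z)"
      by (auto intro!: derivative_eq_intros du dv du1 dv1)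
    moreover have "u2 z * u z + u1 z * u1 z + (v2 z * v z + v1 z * v1 z) = 2 * z * (u1 z * u z + v1 z * v z) + (u1 z)\<^sup>2 + (v1 z)\<^sup>2"
      unfolding ode1 ode2 by (simp add: algebra_simps power2_eq_square)
    ultimately show ?thesis using P0[of z] by simp
  qed
  have z1: "u1 z = 0 \<and> v1 z = 0" for z
  proof -
    have "((\<lambda>z. u1 z * u z + v1 z * v z) has_real_derivative 0) (at z)"
      unfolding P0 by simp
    from DERIV_unique[OF dP[of z] this] show ?thesis by (simp add: sum_power2_eq_zero_iff)
  qed
  have u1z: "u1 = (\<lambda>_. 0)" and v1z: "v1 = (\<lambda>_. 0)" using z1 by auto
  have u2z: "u2 z = 0" and v2z: "v2 z = 0" for z
    using DERIV_unique[OF du1[of z]] DERIV_unique[OF dv1[of z]] unfolding u1z v1z by auto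
  have "v 1 = 0" "u 1 = 0" using ode1[of 1] ode2[of 1] k u2z v2z z1 by auto
  moreover have "u z = u 1" "v z = v 1"
    using DERIV_isconst_all[of u z 1] DERIV_isconst_all[of v z 1] du dv z1 by auto
  ultimately show ?thesis unfolding u_def v_def by (simp add: complex_eq_iff)
qed

lemma dE: "((\<lambda>u::real. exp (c * complex_of_real u)) has_vector_derivative c * exp (c * complex_of_real x)) (at x)"
proof -
  have "((\<lambda>w. exp (c * w)) has_field_derivative exp (c * of_real x) * c) (at (of_real x))"
    by (auto intro!: derivative_eq_intros)
  from has_vector_derivative_real_field[OF this, of UNIV] show ?thesis by (simp add: mult.commute)
qed

lemma AMZ_prod:
  fixes g g1 g2 :: "real \<Rightarrow> complex"
  assumes d1: "\<And>z. (g has_vector_derivative g1 z) (at z)"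
    and d2: "\<And>z. (g1 has_vector_derivative g2 z) (at z)"
  shows "AMZ (\<lambda>m z. g z * exp (\<i> * of_int k * of_real m)) m z =
     ((1/2) * g2 z - of_real z * g1 z + of_real z * (g z * (\<i> * of_int k))) * exp (\<i> * of_int k * of_real m)"
proof -
  define E where "E m = exp (\<i> * of_int k * complex_of_real m)" for m
  have pz1: "pz (\<lambda>m z. g z * E m) m w = g1 w * E m" for m w
    unfolding pz_def by (rule vector_derivative_at) (rule has_vector_derivative_mult_left[OF d1])
  have pz2: "pz (pz (\<lambda>m z. g z * E m)) m z = g2 z * E m"
    unfolding pz_def[of "pz _"] pz1 by (rule vector_derivative_at) (rule has_vector_derivative_mult_left[OF d2])
  have pm1: "pm (\<lambda>m z. g z * E m) m z = g z * (\<i> * of_int k * E m)"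
    unfolding pm_def E_def by (rule vector_derivative_at) (rule has_vector_derivative_mult_right[OF dE])
  show ?thesis
    unfolding E_def[symmetric] AMZ_def pz1 pz2 pm1 by (simp add: algebra_simps)
qed

lemma admissible_derivs:
  assumes "admissible_profile g"
  obtains g1 g2 where "\<And>z. (g has_vector_derivative g1 z) (at z)"
    "\<And>z. (g1 has_vector_derivative g2 z) (at z)"
    "integrable lborel (\<lambda>z. (cmod (g z))\<^sup>2 * exp (- z\<^sup>2))"
proof -
  from assms obtain g1 where d1: "\<And>z. (g has_vector_derivative g1 z) (at z)"
    and dd: "\<And>z. g1 differentiable (at z)" and L: "integrable lborel (\<lambda>z. (cmod (g z))\<^sup>2 * exp (- z\<^sup>2))"
    unfolding admissible_profile_def by blast
  have d2: "(g1 has_vector_derivative vector_derivative g1 (at z)) (at z)" for z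
    using dd[of z] vector_derivative_works by blast
  show ?thesis by (rule that[OF d1 d2 L])
qed

lemma cont_of_deriv:
  assumes "\<And>z. (g has_vector_derivative g1 z) (at z)"
  shows "g \<in> borel_measurable borel"
proof (rule borel_measurable_continuous_onI)
  show "continuous_on UNIV g"
  proof (rule continuous_at_imp_continuous_on, rule ballI)
    fix x show "isCont g x" by (rule has_vector_derivative_continuous[OF assms])
  qed
qed

lemma AMZ_inv_exp_eq:
  fixes g g1 g2 :: "real \<Rightarrow> complex"
  assumes k: "k \<noteq> 0"
    and adm: "admissible_profile g"
    and d1: "\<And>z. (g has_vector_derivative g1 z) (at z)"
    and d2: "\<And>z. (g1 has_vector_derivative g2 z) (at z)"
    and ode: "\<And>z. (1/2) * g2 z - of_real z * g1 z + of_real z * (g z * (\<i> * of_int k)) = 1"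
  shows "AMZ_inv_exp k = (\<lambda>m z. g z * exp (\<i> * of_int k * of_real m))"
  unfolding AMZ_inv_exp_def
proof (rule the_equality)
  show "\<exists>ga. admissible_profile ga \<and> (\<lambda>m z. g z * exp (\<i> * of_int k * of_real m)) = (\<lambda>m z. ga z * exp (\<i> * of_int k * of_real m)) \<and>
      (\<forall>m z. AMZ (\<lambda>m z. g z * exp (\<i> * of_int k * of_real m)) m z = exp (\<i> * of_int k * of_real m))"
    using adm AMZ_prod[OF d1 d2] ode by auto
next
  fix h assume "\<exists>g'. admissible_profile g' \<and> h = (\<lambda>m z. g' z * exp (\<i> * of_int k * of_real m)) \<and>
      (\<forall>m z. AMZ h m z = exp (\<i> * of_int k * of_real m))"
  then obtain g' where adm': "admissible_profile g'" and h: "h = (\<lambda>m z. g' z * exp (\<i> * of_int k * of_real m))"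
    and A: "\<forall>m z. AMZ h m z = exp (\<i> * of_int k * of_real m)" by blast
  obtain g1' g2' where d1': "\<And>z. (g' has_vector_derivative g1' z) (at z)"
    and d2': "\<And>z. (g1' has_vector_derivative g2' z) (at z)"
    and L': "integrable lborel (\<lambda>z. (cmod (g' z))\<^sup>2 * exp (- z\<^sup>2))"
    using admissible_derivs[OF adm'] by blast
  obtain g1'' g2'' where L: "integrable lborel (\<lambda>z. (cmod (g z))\<^sup>2 * exp (- z\<^sup>2))"
    using admissible_derivs[OF adm] by blast
  have ode': "(1/2) * g2' z - of_real z * g1' z + of_real z * (g' z * (\<i> * of_int k)) = 1" for z
    using A[rule_format, of 0 z] unfolding h AMZ_prod[OF d1' d2'] by simp
  define d where "d z = g' z - g z" for z
  have "d z = 0" for z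
  proof (rule homog_zero[of "of_int k" d "\<lambda>z. g1' z - g1 z" "\<lambda>z. g2' z - g2 z"])
    show "of_int k \<noteq> (0::real)" using k by simp
    show "(d has_vector_derivative g1' z - g1 z) (at z)" for z
      unfolding d_def by (intro derivative_intros d1 d1')
    show "((\<lambda>z. g1' z - g1 z) has_vector_derivative g2' z - g2 z) (at z)" for z
      by (intro derivative_intros d2 d2')
    show "(g2' z - g2 z) / 2 - complex_of_real z * (g1' z - g1 z) + \<i> * complex_of_real (real_of_int k) * complex_of_real z * d z = 0" for z
    proof -
      have "(g2' z - g2 z) / 2 - complex_of_real z * (g1' z - g1 z) + \<i> * complex_of_real (real_of_int k) * complex_of_real z * d z
        = ((1/2) * g2' z - of_real z * g1' z + of_real z * (g' z * (\<i> * of_int k))) - ((1/2) * g2 z - of_real z * g1 z + of_real z * (g z * (\<i> * of_int k)))"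
        unfolding d_def by (simp add: algebra_simps diff_divide_distrib)
      also have "\<dots> = 0" using ode[of z] ode'[of z] by simp
      finally show ?thesis .
    qed
    have meas: "d \<in> borel_measurable borel"
      unfolding d_def using cont_of_deriv[OF d1] cont_of_deriv[OF d1'] by measurable
    show "integrable lborel (\<lambda>z. (cmod (d z))\<^sup>2 * exp (- z\<^sup>2))"
    proof (rule Bochner_Integration.integrable_bound[where f="\<lambda>z. 2 * ((cmod (g' z))\<^sup>2 * exp (- z\<^sup>2)) + 2 * ((cmod (g z))\<^sup>2 * exp (- z\<^sup>2))"])
      show "integrable lborel (\<lambda>z. 2 * ((cmod (g' z))\<^sup>2 * exp (- z\<^sup>2)) + 2 * ((cmod (g z))\<^sup>2 * exp (- z\<^sup>2)))"
        using L L' by simp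
      show "(\<lambda>z. (cmod (d z))\<^sup>2 * exp (- z\<^sup>2)) \<in> borel_measurable lborel" using meas by measurable
      show "AE z in lborel. norm ((cmod (d z))\<^sup>2 * exp (- z\<^sup>2)) \<le> norm (2 * ((cmod (g' z))\<^sup>2 * exp (- z\<^sup>2)) + 2 * ((cmod (g z))\<^sup>2 * exp (- z\<^sup>2)))"
      proof (rule AE_I2)
        fix z
        have "(cmod (d z))\<^sup>2 \<le> 2 * (cmod (g' z))\<^sup>2 + 2 * (cmod (g z))\<^sup>2"
        proof -
          have "cmod (d z) \<le> cmod (g' z) + cmod (g z)" unfolding d_def by (rule norm_triangle_ineq4)
          then have "(cmod (d z))\<^sup>2 \<le> (cmod (g' z) + cmod (g z))\<^sup>2" by (simp add: power_mono)
          also have "\<dots> \<le> 2 * (cmod (g' z))\<^sup>2 + 2 * (cmod (g z))\<^sup>2"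
            using zero_le_power2[of "cmod (g' z) - cmod (g z)"] by (simp add: power2_eq_square algebra_simps)
          finally show ?thesis .
        qed
        then have "(cmod (d z))\<^sup>2 * exp (- z\<^sup>2) \<le> (2 * (cmod (g' z))\<^sup>2 + 2 * (cmod (g z))\<^sup>2) * exp (- z\<^sup>2)"
          by (intro mult_right_mono) auto
        moreover have "(2 * (cmod (g' z))\<^sup>2 + 2 * (cmod (g z))\<^sup>2) * exp (- z\<^sup>2) = 2 * ((cmod (g' z))\<^sup>2 * exp (- z\<^sup>2)) + 2 * ((cmod (g z))\<^sup>2 * exp (- z\<^sup>2))"
          by (simp add: distrib_right)
        moreover have "0 \<le> (cmod (d z))\<^sup>2 * exp (- z\<^sup>2)" by simp
        ultimately show "norm ((cmod (d z))\<^sup>2 * exp (- z\<^sup>2)) \<le> norm (2 * ((cmod (g' z))\<^sup>2 * exp (- z\<^sup>2)) + 2 * ((cmod (g z))\<^sup>2 * exp (- z\<^sup>2)))"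
          unfolding real_norm_def by linarith
      qed
    qed
  qed
  then have "g' = g" unfolding d_def by (auto simp: fun_eq_iff)
  then show "h = (\<lambda>m z. g z * exp (\<i> * of_int k * of_real m))" unfolding h by simp
qed

lemma FTC_Ioi:
  fixes Q q :: "real \<Rightarrow> 'a::euclidean_space"
  assumes d: "\<And>x. x > 0 \<Longrightarrow> (Q has_vector_derivative q x) (at x)"
    and c: "\<And>x. x > 0 \<Longrightarrow> isCont q x"
    and i: "set_integrable lborel {0<..} q"
    and A: "(Q \<longlongrightarrow> A) (at_right 0)" and B: "(Q \<longlongrightarrow> B) at_top"
  shows "set_lebesgue_integral lborel {0<..} q = B - A"
proof -
  have "interval_lebesgue_integral lborel (ereal 0) \<infinity> q = B - A"
  proof (rule interval_integral_FTC_integrable[where F=Q])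
    show "set_integrable lborel (einterval (ereal 0) \<infinity>) q" using i by simp
    show "((Q \<circ> real_of_ereal) \<longlongrightarrow> A) (at_right (ereal 0))" using A by (simp add: ereal_tendsto_simps1)
    show "((Q \<circ> real_of_ereal) \<longlongrightarrow> B) (at_left \<infinity>)" using B by (simp add: ereal_tendsto_simps1)
  qed (use d c in auto)
  then show ?thesis by (simp add: interval_lebesgue_integral_def)
qed

lemma exp_decay:
  fixes b :: real assumes b: "b > 0"
  shows "set_integrable lborel {0<..} (\<lambda>t. exp (- b * t))"
    and "set_lebesgue_integral lborel {0<..} (\<lambda>t. exp (- b * t)) = 1 / b"
proof -
  have d: "((\<lambda>t. - exp (- b * t) / b) has_real_derivative exp (- b * t)) (at t)" for t
    using b by (auto intro!: derivative_eq_intros)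
  have A: "((\<lambda>t. - exp (- b * t) / b) \<longlongrightarrow> - 1 / b) (at_right 0)"
    using b by (auto intro!: tendsto_eq_intros)
  have B: "((\<lambda>t. - exp (- b * t) / b) \<longlongrightarrow> 0) at_top"
  proof -
    have "((\<lambda>t. exp (- b * t)) \<longlongrightarrow> 0) at_top"
      using b by real_asymp
    from tendsto_minus[OF tendsto_divide[OF this tendsto_const[of b]]] show ?thesis using b by simp
  qed
  have "interval_lebesgue_integral lborel (ereal 0) \<infinity> (\<lambda>t. exp (- b * t)) = 0 - (- 1 / b)
     \<and> set_integrable lborel (einterval (ereal 0) \<infinity>) (\<lambda>t. exp (- b * t))"
    using interval_integral_FTC_nonneg[where F="\<lambda>t. - exp (- b * t) / b" and f="\<lambda>t. exp (- b * t)" and a="ereal 0" and b=\<infinity>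
        and A="- 1 / b" and B=0] d A B
    by (auto simp: ereal_tendsto_simps1)
  then show "set_integrable lborel {0<..} (\<lambda>t. exp (- b * t))"
    and "set_lebesgue_integral lborel {0<..} (\<lambda>t. exp (- b * t)) = 1 / b"
    by (auto simp: interval_lebesgue_integral_def)
qed

definition aa :: "real \<Rightarrow> real" where "aa t = 1 - exp (- t)"
definition VV :: "real \<Rightarrow> real" where "VV t = t - 2 * (1 - exp (- t)) + (1 - exp (- 2 * t)) / 2"
definition psi :: "real \<Rightarrow> real \<Rightarrow> real" where "psi \<kappa> t = exp (- (\<kappa>\<^sup>2) * VV t / 2)"
definition Phi :: "real \<Rightarrow> nat \<Rightarrow> real \<Rightarrow> real \<Rightarrow> complex" where
  "Phi \<kappa> j z t = of_real (indicator {0<..} t * psi \<kappa> t) * (\<i> * of_real (\<kappa> * aa t)) ^ j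
      * exp (\<i> * of_real (\<kappa> * aa t) * of_real z)"
definition GG :: "real \<Rightarrow> nat \<Rightarrow> real \<Rightarrow> complex" where
  "GG \<kappa> j z = integral\<^sup>L lborel (Phi \<kappa> j z)"
definition wb :: "real \<Rightarrow> real \<Rightarrow> real" where
  "wb \<kappa> t = indicator {0<..} t * (exp (\<kappa>\<^sup>2) * exp (- (\<kappa>\<^sup>2 / 2) * t))"

lemma aa_bounds: "t \<ge> 0 \<Longrightarrow> 0 \<le> aa t \<and> aa t \<le> 1"
  unfolding aa_def by auto

lemma psi_pos: "psi \<kappa> t > 0" unfolding psi_def by simp

lemma psi_bound: assumes "t \<ge> 0" shows "psi \<kappa> t \<le> exp (\<kappa>\<^sup>2) * exp (- (\<kappa>\<^sup>2 / 2) * t)"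
proof -
  have "exp (- 2 * t) \<le> 1" using assms by simp
  moreover have "exp (- t) > 0" by simp
  ultimately have "VV t \<ge> t - 2" unfolding VV_def by simp
  then have "- (\<kappa>\<^sup>2) * VV t / 2 \<le> \<kappa>\<^sup>2 + (- (\<kappa>\<^sup>2 / 2) * t)"
  proof -
    have "\<kappa>\<^sup>2 * (t - 2) \<le> \<kappa>\<^sup>2 * VV t" using \<open>VV t \<ge> t - 2\<close> by (rule mult_left_mono) simp
    then show ?thesis by (simp add: algebra_simps)
  qed
  then show ?thesis unfolding psi_def by (simp add: exp_add[symmetric])
qed

lemma wb_integrable: assumes "\<kappa> \<noteq> 0" shows "integrable lborel (wb \<kappa>)"
proof -
  have "set_integrable lborel {0<..} (\<lambda>t. exp (- (\<kappa>\<^sup>2 / 2) * t))"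
    using exp_decay(1)[of "\<kappa>\<^sup>2 / 2"] assms by simp
  then have "integrable lborel (\<lambda>t. exp (\<kappa>\<^sup>2) * (indicator {0<..} t * exp (- (\<kappa>\<^sup>2 / 2) * t)))"
    unfolding set_integrable_def by simp
  then show ?thesis unfolding wb_def by (simp add: ac_simps)
qed

lemma wb_nonneg: "wb \<kappa> t \<ge> 0" unfolding wb_def by (simp add: indicator_def)

lemma norm_exp_ii: "cmod (exp (\<i> * complex_of_real x * complex_of_real y)) = 1"
  by (simp add: norm_exp_eq_Re)

lemma Phi_bound: "cmod (Phi \<kappa> j z t) \<le> \<bar>\<kappa>\<bar> ^ j * wb \<kappa> t"
proof (cases "t > 0")
  case True
  have "cmod (Phi \<kappa> j z t) = psi \<kappa> t * \<bar>\<kappa> * aa t\<bar> ^ j"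
    unfolding Phi_def using True psi_pos[of \<kappa> t] by (simp add: norm_mult norm_power norm_exp_ii abs_mult)
  also have "\<dots> \<le> psi \<kappa> t * \<bar>\<kappa>\<bar> ^ j"
  proof -
    have "\<bar>\<kappa> * aa t\<bar> \<le> \<bar>\<kappa>\<bar>" using aa_bounds[of t] True by (simp add: abs_mult mult_left_le)
    then show ?thesis using psi_pos[of \<kappa> t] by (intro mult_left_mono power_mono) auto
  qed
  also have "\<dots> \<le> \<bar>\<kappa>\<bar> ^ j * wb \<kappa> t"
    using mult_right_mono[OF psi_bound[of t \<kappa>], of "\<bar>\<kappa>\<bar> ^ j"] True unfolding wb_def by (simp add: mult.commute)
  finally show ?thesis .
next
  case False then show ?thesis unfolding Phi_def wb_def by simp
qed

lemma Phi_meas: "Phi \<kappa> j z \<in> borel_measurable lborel"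
proof -
  have c: "(\<lambda>t. of_real (psi \<kappa> t) * (\<i> * of_real (\<kappa> * aa t)) ^ j
      * exp (\<i> * of_real (\<kappa> * aa t) * of_real z)) \<in> borel_measurable borel"
    by (rule borel_measurable_continuous_onI) (unfold psi_def VV_def aa_def, intro continuous_intros, auto)
  have s: "{0::real<..} \<in> sets borel" by simp
  have i: "(\<lambda>t::real. complex_of_real (indicator {0<..} t)) \<in> borel_measurable borel"
  proof -
    have o: "complex_of_real \<in> borel_measurable borel"
      by (rule borel_measurable_continuous_onI) (intro continuous_intros)
    have ii: "(indicator {0::real<..} :: real \<Rightarrow> real) \<in> borel_measurable borel" using s by (rule borel_measurable_indicator)
    show ?thesis using measurable_compose[OF ii o] by simp
  qed
  have "Phi \<kappa> j z = (\<lambda>t. complex_of_real (indicator {0<..} t) * (of_real (psi \<kappa> t) * (\<i> * of_real (\<kappa> * aa t)) ^ j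
      * exp (\<i> * of_real (\<kappa> * aa t) * of_real z)))"
    unfolding Phi_def by (auto simp: fun_eq_iff)
  then show ?thesis using borel_measurable_times[OF i c] by simp
qed

lemma Phi_integrable: assumes "\<kappa> \<noteq> 0" shows "integrable lborel (Phi \<kappa> j z)"
proof (rule Bochner_Integration.integrable_bound[of _ "\<lambda>t. \<bar>\<kappa>\<bar> ^ j * wb \<kappa> t"])
  show "integrable lborel (\<lambda>t. \<bar>\<kappa>\<bar> ^ j * wb \<kappa> t)" using wb_integrable[OF assms] by simp
  show "Phi \<kappa> j z \<in> borel_measurable lborel" by (rule Phi_meas)
  show "AE t in lborel. norm (Phi \<kappa> j z t) \<le> norm (\<bar>\<kappa>\<bar> ^ j * wb \<kappa> t)"
  proof (rule AE_I2)
    fix t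
    have "0 \<le> \<bar>\<kappa>\<bar> ^ j * wb \<kappa> t" using wb_nonneg[of \<kappa> t] by simp
    then show "norm (Phi \<kappa> j z t) \<le> norm (\<bar>\<kappa>\<bar> ^ j * wb \<kappa> t)"
      using Phi_bound[of \<kappa> j z t] by simp
  qed
qed

lemma Phi_deriv: "((\<lambda>z. Phi \<kappa> j z t) has_vector_derivative Phi \<kappa> (Suc j) z t) (at z)"
proof -
  have "((\<lambda>z. of_real (indicator {0<..} t * psi \<kappa> t) * (\<i> * of_real (\<kappa> * aa t)) ^ j
      * exp ((\<i> * of_real (\<kappa> * aa t)) * of_real z)) has_vector_derivative
      of_real (indicator {0<..} t * psi \<kappa> t) * (\<i> * of_real (\<kappa> * aa t)) ^ j * ((\<i> * of_real (\<kappa> * aa t)) * exp ((\<i> * of_real (\<kappa> * aa t)) * of_real z))) (at z)"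
    by (intro has_vector_derivative_mult_right dE)
  then show ?thesis unfolding Phi_def by (simp add: ac_simps)
qed

lemma GG_deriv: assumes "\<kappa> \<noteq> 0" shows "(GG \<kappa> j has_vector_derivative GG \<kappa> (Suc j) z) (at z)"
  unfolding GG_def
proof (rule deriv_integral[where w="\<lambda>t. \<bar>\<kappa>\<bar> ^ Suc j * wb \<kappa> t"])
  show "integrable lborel (\<lambda>t. \<bar>\<kappa>\<bar> ^ Suc j * wb \<kappa> t)"
    using wb_integrable[OF assms] by (simp del: power_Suc)
  show "cmod (Phi \<kappa> (Suc j) z t) \<le> \<bar>\<kappa>\<bar> ^ Suc j * wb \<kappa> t" for z t
    by (rule Phi_bound)
qed (rule Phi_meas Phi_integrable[OF assms] Phi_deriv)+

lemma daa: "(aa has_real_derivative exp (- t)) (at t)"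
  unfolding aa_def by (auto intro!: derivative_eq_intros)

lemma aa_sq: "1 - 2 * exp (- t) + exp (- 2 * t) = (aa t)\<^sup>2"
proof -
  have "exp (- 2 * t) = exp (- t) * exp (- t)" by (simp add: exp_add[symmetric])
  then show ?thesis unfolding aa_def by (simp add: power2_eq_square algebra_simps)
qed

lemma dpsi: "(psi \<kappa> has_real_derivative psi \<kappa> t * (- (\<kappa>\<^sup>2) * (aa t)\<^sup>2 / 2)) (at t)"
proof -
  have dV: "(VV has_real_derivative 1 - 2 * exp (- t) + exp (- 2 * t)) (at t)"
    unfolding VV_def[abs_def] by (auto intro!: derivative_eq_intros)
  have "(psi \<kappa> has_real_derivative psi \<kappa> t * (- (\<kappa>\<^sup>2) * (1 - 2 * exp (- t) + exp (- 2 * t)) / 2)) (at t)"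
    unfolding psi_def[abs_def] by (rule DERIV_fun_exp[OF DERIV_cdivide[OF DERIV_cmult[OF dV]]])
  then show ?thesis unfolding aa_sq .
qed

lemma dEt: "((\<lambda>t. exp (\<i> * of_real (\<kappa> * aa t) * of_real z)) has_vector_derivative
   (\<i> * of_real (\<kappa> * exp (- t)) * of_real z) * exp (\<i> * of_real (\<kappa> * aa t) * of_real z)) (at t)"
proof -
  have f: "((\<lambda>t. \<i> * of_real (\<kappa> * aa t) * of_real z) has_vector_derivative \<i> * of_real (\<kappa> * exp (- t)) * of_real z) (at t)"
    by (intro has_vector_derivative_mult_left has_vector_derivative_mult_right has_vector_derivative_of_real
        DERIV_cmult daa)
  have "(((\<lambda>w. exp w) \<circ> (\<lambda>t. \<i> * of_real (\<kappa> * aa t) * of_real z)) has_vector_derivative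
     (\<i> * of_real (\<kappa> * exp (- t)) * of_real z) * exp (\<i> * of_real (\<kappa> * aa t) * of_real z)) (at t)"
    by (rule field_vector_diff_chain_at[OF f]) (rule DERIV_exp)
  then show ?thesis by (simp add: o_def)
qed

lemma alg1: "(1/2) * (\<i> * of_real (\<kappa> * a))^2 - Z * (\<i> * of_real (\<kappa> * a)) + Z * (\<i> * of_real \<kappa>)
   = of_real (- (\<kappa>\<^sup>2) * a\<^sup>2 / 2) + \<i> * of_real (\<kappa> * (1 - a)) * (Z::complex)"
  by (simp add: power2_eq_square algebra_simps power_mult_distrib)

lemma alg2: "(1/2) * (P * c^2 * E) - Z * (P * c^1 * E) + Z * (P * c^0 * E * K) = P * E * ((1/2) * c^2 - Z * c + Z * K)"
  for P c E Z K :: complex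
  by (simp add: algebra_simps)

lemma GG_ode:
  assumes k: "\<kappa> \<noteq> 0"
  shows "(1/2) * GG \<kappa> 2 z - of_real z * GG \<kappa> 1 z + of_real z * (GG \<kappa> 0 z * (\<i> * of_real \<kappa>)) = -1"
proof -
  define E where "E t = exp (\<i> * of_real (\<kappa> * aa t) * of_real z)" for t
  define Q where "Q t = of_real (psi \<kappa> t) * E t" for t
  define q where "q t = of_real (psi \<kappa> t) * ((\<i> * of_real (\<kappa> * exp (- t)) * of_real z) * E t)
     + of_real (psi \<kappa> t * (- (\<kappa>\<^sup>2) * (aa t)\<^sup>2 / 2)) * E t" for t
  have dQ: "(Q has_vector_derivative q t) (at t)" for t
    unfolding Q_def q_def E_def
    by (rule has_vector_derivative_mult[OF has_vector_derivative_of_real[OF dpsi] dEt])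
  have cq: "isCont q t" for t
    unfolding q_def E_def psi_def VV_def aa_def by (intro continuous_intros, auto)
  define L where "L t = (1/2) * Phi \<kappa> 2 z t - of_real z * Phi \<kappa> 1 z t + of_real z * (Phi \<kappa> 0 z t * (\<i> * of_real \<kappa>))" for t
  have Lq: "L t = indicator {0<..} t *\<^sub>R q t" for t
  proof (cases "t > 0")
    case True
    have e: "1 - aa t = exp (- t)" unfolding aa_def by simp
    have "L t = of_real (indicator {0<..} t * psi \<kappa> t) * E t * ((1/2) * (\<i> * of_real (\<kappa> * aa t))^2 - of_real z * (\<i> * of_real (\<kappa> * aa t)) + of_real z * (\<i> * of_real \<kappa>))"
      unfolding L_def Phi_def E_def alg2 ..
    also have "(1/2) * (\<i> * of_real (\<kappa> * aa t))^2 - of_real z * (\<i> * of_real (\<kappa> * aa t)) + of_real z * (\<i> * of_real \<kappa>)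
        = of_real (- (\<kappa>\<^sup>2) * (aa t)\<^sup>2 / 2) + \<i> * of_real (\<kappa> * exp (- t)) * of_real z"
      unfolding alg1 e ..
    also have "of_real (indicator {0<..} t * psi \<kappa> t) * E t * (of_real (- (\<kappa>\<^sup>2) * (aa t)\<^sup>2 / 2) + \<i> * of_real (\<kappa> * exp (- t)) * of_real z)
       = q t" unfolding q_def using True by (simp add: algebra_simps)
    finally show ?thesis using True by simp
  next
    case False then show ?thesis unfolding L_def Phi_def by simp
  qed
  have intL: "integrable lborel L"
    unfolding L_def using Phi_integrable[OF k] by simp
  have "integral\<^sup>L lborel L = (1/2) * GG \<kappa> 2 z - of_real z * GG \<kappa> 1 z + of_real z * (GG \<kappa> 0 z * (\<i> * of_real \<kappa>))"
    unfolding L_def GG_def using Phi_integrable[OF k] by simp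
  moreover have "integral\<^sup>L lborel L = set_lebesgue_integral lborel {0<..} q"
    unfolding set_lebesgue_integral_def Lq ..
  moreover have "set_lebesgue_integral lborel {0<..} q = 0 - 1"
  proof (rule FTC_Ioi[where Q=Q])
    show "set_integrable lborel {0<..} q"
      unfolding set_integrable_def using intL unfolding Lq .
    show "(Q \<longlongrightarrow> 1) (at_right 0)"
    proof -
      have "isCont Q 0" unfolding Q_def E_def psi_def VV_def aa_def by (intro continuous_intros, auto)
      then have "(Q \<longlongrightarrow> Q 0) (at 0)" by (simp add: isCont_def)
      moreover have "Q 0 = 1" unfolding Q_def E_def psi_def VV_def aa_def by simp
      ultimately show ?thesis by (auto intro: tendsto_mono[OF at_le])
    qed
    show "(Q \<longlongrightarrow> 0) at_top"
    proof (rule Lim_null_comparison)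
      show "\<forall>\<^sub>F t in at_top. norm (Q t) \<le> exp (\<kappa>\<^sup>2) * exp (- (\<kappa>\<^sup>2 / 2) * t)"
        using eventually_ge_at_top[of "0::real"]
      proof eventually_elim
        case (elim t)
        have "norm (Q t) = psi \<kappa> t" unfolding Q_def E_def using psi_pos[of \<kappa> t]
          by (simp add: norm_mult norm_exp_ii)
        then show ?case using psi_bound[OF elim] by simp
      qed
      have "((\<lambda>t. exp (- (\<kappa>\<^sup>2 / 2) * t)) \<longlongrightarrow> 0) at_top"
        using k by real_asymp
      then show "((\<lambda>t. exp (\<kappa>\<^sup>2) * exp (- (\<kappa>\<^sup>2 / 2) * t)) \<longlongrightarrow> 0) at_top"
        by (rule tendsto_mult_right_zero)
    qed
  qed (use dQ cq in auto)
  ultimately show ?thesis by simp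
qed

lemma gauss_char:
  "(LINT z|lborel. exp (\<i> * of_real b * of_real z) * of_real (exp (- z\<^sup>2))) = of_real (sqrt pi * exp (- b\<^sup>2 / 4))"
proof -
  define s where "s = b / sqrt 2"
  define I where "I = (LINT z|lborel. exp (\<i> * of_real b * of_real z) * of_real (exp (- z\<^sup>2)))"
  have "char std_normal_distribution s = of_real (exp (- (s\<^sup>2) / 2))"
    by (simp add: char_std_normal_distribution)
  also have "char std_normal_distribution s = (CLINT x|lborel. std_normal_density x *\<^sub>R iexp (s * x))"
    unfolding char_def by (subst integral_density) auto
  also have "\<dots> = \<bar>sqrt 2\<bar> *\<^sub>R (CLINT z|lborel. std_normal_density (0 + sqrt 2 * z) *\<^sub>R iexp (s * (0 + sqrt 2 * z)))"
    by (rule lborel_integral_real_affine) simp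
  also have "(\<lambda>z. std_normal_density (0 + sqrt 2 * z) *\<^sub>R iexp (s * (0 + sqrt 2 * z)))
      = (\<lambda>z. of_real (1 / sqrt (2 * pi)) * (exp (\<i> * of_real b * of_real z) * of_real (exp (- z\<^sup>2))))"
  proof (rule ext)
    fix z :: real
    have a1: "- (0 + sqrt 2 * z)\<^sup>2 / 2 = - z\<^sup>2" by (simp add: power_mult_distrib)
    have a2: "s * (0 + sqrt 2 * z) = b * z" by (simp add: s_def)
    show "std_normal_density (0 + sqrt 2 * z) *\<^sub>R iexp (s * (0 + sqrt 2 * z))
      = of_real (1 / sqrt (2 * pi)) * (exp (\<i> * of_real b * of_real z) * of_real (exp (- z\<^sup>2)))"
      unfolding std_normal_density_def a1 a2 scaleR_conv_of_real by (simp add: mult_ac)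
  qed
  finally have F: "of_real (exp (- (s\<^sup>2) / 2)) = sqrt 2 *\<^sub>R (of_real (1 / sqrt (2 * pi)) * I)"
    unfolding I_def by simp
  have e1: "s\<^sup>2 / 2 = b\<^sup>2 / 4" unfolding s_def by (simp add: power_divide)
  have e2: "sqrt 2 * (1 / sqrt (2 * pi)) = 1 / sqrt pi" by (simp add: real_sqrt_mult)
  have "sqrt 2 *\<^sub>R (of_real (1 / sqrt (2 * pi)) * I) = of_real (sqrt 2 * (1 / sqrt (2 * pi))) * I"
    by (simp add: scaleR_conv_of_real)
  also have "\<dots> = of_real (1 / sqrt pi) * I" unfolding e2 ..
  finally have G: "sqrt 2 *\<^sub>R (of_real (1 / sqrt (2 * pi)) * I) = of_real (1 / sqrt pi) * I" .
  have e1': "- (s\<^sup>2) / 2 = - b\<^sup>2 / 4" using e1 by simp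
  have "of_real (exp (- b\<^sup>2 / 4)) = of_real (1 / sqrt pi) * I" using trans[OF F G] unfolding e1' .
  then have "of_real (sqrt pi) * of_real (exp (- b\<^sup>2 / 4)) = of_real (sqrt pi) * (of_real (1 / sqrt pi) * I)" by simp
  also have "\<dots> = (of_real (sqrt pi) * of_real (1 / sqrt pi)) * I" by (simp only: mult.assoc)
  also have "of_real (sqrt pi) * of_real (1 / sqrt pi) = (1::complex)" by (simp flip: of_real_mult)
  finally have "of_real (sqrt pi) * of_real (exp (- b\<^sup>2 / 4)) = I" by simp
  then show ?thesis unfolding I_def by simp
qed

lemma GG_bound: assumes k: "\<kappa> \<noteq> 0" shows "cmod (GG \<kappa> 0 z) \<le> integral\<^sup>L lborel (wb \<kappa>)"
proof -
  have "cmod (GG \<kappa> 0 z) \<le> (LINT t|lborel. cmod (Phi \<kappa> 0 z t))"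
    unfolding GG_def by (rule integral_norm_bound)
  also have "\<dots> \<le> integral\<^sup>L lborel (wb \<kappa>)"
  proof (rule integral_mono)
    show "integrable lborel (\<lambda>t. cmod (Phi \<kappa> 0 z t))" using Phi_integrable[OF k] by simp
    show "integrable lborel (wb \<kappa>)" by (rule wb_integrable[OF k])
    show "cmod (Phi \<kappa> 0 z t) \<le> wb \<kappa> t" for t using Phi_bound[of \<kappa> 0 z t] by simp
  qed
  finally show ?thesis .
qed

lemma AMZ_inv_exp_formula:
  assumes k: "k \<noteq> 0"
  shows "AMZ_inv_exp k = (\<lambda>m z. (- GG (of_int k) 0 z) * exp (\<i> * of_int k * of_real m))"
proof -
  define \<kappa> where "\<kappa> = (of_int k :: real)"
  have k': "\<kappa> \<noteq> 0" unfolding \<kappa>_def using k by simp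
  have d1: "((\<lambda>z. - GG \<kappa> 0 z) has_vector_derivative - GG \<kappa> 1 z) (at z)" for z
    using has_vector_derivative_minus[OF GG_deriv[OF k', of 0 z]] by simp
  have d2: "((\<lambda>z. - GG \<kappa> 1 z) has_vector_derivative - GG \<kappa> 2 z) (at z)" for z
    using has_vector_derivative_minus[OF GG_deriv[OF k', of 1 z]] by (simp add: numeral_2_eq_2)
  have ode: "(1/2) * (- GG \<kappa> 2 z) - of_real z * (- GG \<kappa> 1 z) + of_real z * ((- GG \<kappa> 0 z) * (\<i> * of_int k)) = 1" for z
  proof -
    have "(1/2) * (- GG \<kappa> 2 z) - of_real z * (- GG \<kappa> 1 z) + of_real z * ((- GG \<kappa> 0 z) * (\<i> * of_int k))
      = - ((1/2) * GG \<kappa> 2 z - of_real z * GG \<kappa> 1 z + of_real z * (GG \<kappa> 0 z * (\<i> * of_real \<kappa>)))"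
      unfolding \<kappa>_def by (simp add: algebra_simps)
    also have "\<dots> = 1" using GG_ode[OF k', of z] by simp
    finally show ?thesis .
  qed
  have adm: "admissible_profile (\<lambda>z. - GG \<kappa> 0 z)"
    unfolding admissible_profile_def
  proof (intro conjI exI[of _ "\<lambda>z. - GG \<kappa> 1 z"] allI)
    show "((\<lambda>z. - GG \<kappa> 0 z) has_vector_derivative - GG \<kappa> 1 z) (at z)" for z by (rule d1)
    show "(\<lambda>z. - GG \<kappa> 1 z) differentiable at z" for z
      using d2[of z] unfolding vector_derivative_works[symmetric] by (auto simp: differentiable_def has_vector_derivative_def)
    define C where "C = integral\<^sup>L lborel (wb \<kappa>)"
    have meas: "(\<lambda>z. - GG \<kappa> 0 z) \<in> borel_measurable borel" by (rule cont_of_deriv[OF d1])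
    show "integrable lborel (\<lambda>z. (cmod (- GG \<kappa> 0 z))\<^sup>2 * exp (- z\<^sup>2))"
    proof (rule Bochner_Integration.integrable_bound[of _ "\<lambda>z. C\<^sup>2 * exp (- z\<^sup>2)"])
      show "integrable lborel (\<lambda>z. C\<^sup>2 * exp (- z\<^sup>2))" using integrable_gauss by simp
      show "(\<lambda>z. (cmod (- GG \<kappa> 0 z))\<^sup>2 * exp (- z\<^sup>2)) \<in> borel_measurable lborel" using meas by measurable
      show "AE z in lborel. norm ((cmod (- GG \<kappa> 0 z))\<^sup>2 * exp (- z\<^sup>2)) \<le> norm (C\<^sup>2 * exp (- z\<^sup>2))"
      proof (rule AE_I2)
        fix z
        have "(cmod (- GG \<kappa> 0 z))\<^sup>2 \<le> C\<^sup>2"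
          using GG_bound[OF k', of z] unfolding C_def by (simp add: power_mono)
        then show "norm ((cmod (- GG \<kappa> 0 z))\<^sup>2 * exp (- z\<^sup>2)) \<le> norm (C\<^sup>2 * exp (- z\<^sup>2))"
          by (simp add: mult_right_mono)
      qed
    qed
  qed
  show ?thesis unfolding \<kappa>_def[symmetric]
    by (rule AMZ_inv_exp_eq[OF k adm d1 d2 ode])
qed

lemma m_integral:
  "(LBINT m=0..2*pi. cnj (exp (\<i> * of_int l * of_real m)) * exp (\<i> * of_int k * of_real m)) = (if k = l then 2*pi else 0)"
proof -
  define n where "n = k - l"
  have eq: "cnj (exp (\<i> * of_int l * of_real m)) * exp (\<i> * of_int k * of_real m) = exp (\<i> * of_int n * of_real m)" for m
    unfolding n_def exp_cnj by (simp add: exp_add[symmetric] algebra_simps)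
  show ?thesis
  proof (cases "k = l")
    case True
    have "(LBINT m=ereal 0..ereal (2*pi). (1::complex)) = of_real (2*pi) - of_real 0"
      by (rule interval_integral_FTC_finite) (auto intro!: derivative_eq_intros continuous_intros)
    then show ?thesis unfolding eq n_def zero_ereal_def using True by simp
  next
    case False
    then have n0: "n \<noteq> 0" unfolding n_def by simp
    have "(LBINT m=ereal 0..ereal (2*pi). exp (\<i> * of_int n * of_real m)) =
       exp (\<i> * of_int n * of_real (2*pi)) / (\<i> * of_int n) - exp (\<i> * of_int n * of_real 0) / (\<i> * of_int n)"
    proof (rule interval_integral_FTC_finite)
      show "continuous_on {min 0 (2 * pi)..max 0 (2 * pi)} (\<lambda>m. exp (\<i> * of_int n * complex_of_real m))"
        by (intro continuous_intros)
      fix x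
      have "((\<lambda>m. exp ((\<i> * of_int n) * complex_of_real m)) has_vector_derivative (\<i> * of_int n) * exp ((\<i> * of_int n) * complex_of_real x)) (at x)"
        by (rule dE)
      then have "((\<lambda>m. exp ((\<i> * of_int n) * complex_of_real m) / (\<i> * of_int n)) has_vector_derivative exp ((\<i> * of_int n) * complex_of_real x)) (at x)"
        using has_vector_derivative_mult_left[of _ _ _ "1 / (\<i> * of_int n)"] n0 by (fastforce simp: field_simps)
      then show "((\<lambda>m. exp (\<i> * of_int n * of_real m) / (\<i> * of_int n)) has_vector_derivative exp (\<i> * of_int n * complex_of_real x))
          (at x within {min 0 (2 * pi)..max 0 (2 * pi)})"
        by (rule has_vector_derivative_at_within)
    qed
    also have "exp (\<i> * of_int n * of_real (2*pi)) = 1"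
    proof -
      have "exp (\<i> * of_int n * of_real (2*pi)) = exp ((2 * (of_int n) * pi) * \<i>)" by (simp add: mult_ac)
      also have "\<dots> = 1" by (rule exp_integer_2pi) simp
      finally show ?thesis .
    qed
    finally show ?thesis unfolding eq zero_ereal_def using False by simp
  qed
qed

lemma MZ_formula:
  assumes k: "k \<noteq> 0"
  shows "MZ_form_exp l k = (if k = l then 1 else 0) *
     (LINT z|lborel. GG (of_int k) 0 z * of_real (exp (- z\<^sup>2) / sqrt pi))"
proof -
  define G where "G z = - GG (of_int k) 0 z" for z
  define \<rho> where "\<rho> z = 1 / (2*pi) * exp (- z\<^sup>2) / sqrt pi" for z
  define c where "c = (if k = l then 2*pi else 0 :: complex)"
  have inner: "(LBINT m=0..2*pi. cnj (exp (\<i> * of_int l * of_real m)) * (G z * exp (\<i> * of_int k * of_real m)) * of_real (\<rho> z))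
      = (G z * of_real (\<rho> z)) * c" for z
  proof -
    have "(LBINT m=0..2*pi. cnj (exp (\<i> * of_int l * of_real m)) * (G z * exp (\<i> * of_int k * of_real m)) * of_real (\<rho> z))
       = (LBINT m=0..2*pi. (G z * of_real (\<rho> z)) * (cnj (exp (\<i> * of_int l * of_real m)) * exp (\<i> * of_int k * of_real m)))"
      by (simp only: mult_ac)
    also have "\<dots> = (G z * of_real (\<rho> z)) * c"
      unfolding interval_lebesgue_integral_mult_right m_integral c_def by (simp split: if_split)
    finally show ?thesis .
  qed
  have "MZ_form_exp l k = - (LINT z|lborel. (G z * of_real (\<rho> z)) * c)"
    unfolding MZ_form_exp_def AMZ_inv_exp_formula[OF k] G_def[symmetric] \<rho>_def[symmetric] inner ..
  also have "\<dots> = - ((LINT z|lborel. G z * of_real (\<rho> z)) * c)" by simp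
  also have "\<dots> = (if k = l then 1 else 0) * (LINT z|lborel. GG (of_int k) 0 z * of_real (exp (- z\<^sup>2) / sqrt pi))"
  proof (cases "k = l")
    case True
    have "- ((LINT z|lborel. G z * of_real (\<rho> z)) * c) = (LINT z|lborel. (G z * of_real (\<rho> z)) * (- c))"
      by simp
    also have "\<dots> = (LINT z|lborel. GG (of_int k) 0 z * of_real (exp (- z\<^sup>2) / sqrt pi))"
    proof (rule Bochner_Integration.integral_cong[OF refl])
      fix z
      have "of_real (\<rho> z) * (2 * of_real pi) = (of_real (exp (- z\<^sup>2) / sqrt pi) :: complex)"
      proof -
        have r: "\<rho> z * (2 * pi) = exp (- z\<^sup>2) / sqrt pi" unfolding \<rho>_def by simp
        have "of_real (\<rho> z) * (2 * of_real pi) = (of_real (\<rho> z * (2 * pi)) :: complex)" by simp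
        then show ?thesis unfolding r .
      qed
      then show "G z * of_real (\<rho> z) * - c = GG (of_int k) 0 z * of_real (exp (- z\<^sup>2) / sqrt pi)"
        unfolding G_def c_def using True by (simp add: mult.assoc)
    qed
    finally show ?thesis using True by simp
  next
    case False then show ?thesis unfolding c_def by simp
  qed
  finally show ?thesis .
qed

lemma norm_Phi0: "cmod (Phi \<kappa> 0 z t) = indicator {0<..} t * psi \<kappa> t"
  unfolding Phi_def using psi_pos[of \<kappa> t] by (simp add: norm_mult norm_exp_ii indicator_def)

lemma GG_gauss:
  assumes k: "\<kappa> \<noteq> 0"
  shows "(LINT z|lborel. GG \<kappa> 0 z * of_real (exp (- z\<^sup>2))) =
     of_real (sqrt pi) * of_real (LINT t|lborel. indicator {0<..} t * (psi \<kappa> t * exp (- (\<kappa> * aa t)\<^sup>2 / 4)))"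
proof -
  define F where "F t z = Phi \<kappa> 0 z t * of_real (exp (- z\<^sup>2))" for t z
  define C where "C p = of_real (psi \<kappa> (fst p)) * exp (\<i> * of_real (\<kappa> * aa (fst p)) * of_real (snd p)) * of_real (exp (- (snd p)\<^sup>2))" for p :: "real \<times> real"
  have Cm: "C \<in> borel_measurable borel"
    by (rule borel_measurable_continuous_onI) (unfold C_def psi_def VV_def aa_def, intro continuous_intros, auto)
  have S: "{0::real<..} \<times> (UNIV :: real set) \<in> sets borel" by (intro borel_open open_Times) auto
  have o: "complex_of_real \<in> borel_measurable borel"
    by (rule borel_measurable_continuous_onI) (intro continuous_intros)
  have Im: "(\<lambda>p. complex_of_real (indicator ({0::real<..} \<times> (UNIV :: real set)) p)) \<in> borel_measurable borel"
    using measurable_compose[OF borel_measurable_indicator[OF S] o] by simp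
  have Feq: "(\<lambda>(t, z). F t z) = (\<lambda>p. complex_of_real (indicator ({0::real<..} \<times> (UNIV :: real set)) p) * C p)"
    by (auto simp: fun_eq_iff F_def C_def Phi_def indicator_def)
  have Fm: "(\<lambda>(t, z). F t z) \<in> borel_measurable (lborel \<Otimes>\<^sub>M lborel)"
    unfolding lborel_prod measurable_lborel2 Feq using borel_measurable_times[OF Im Cm] .
  have intF: "integrable (lborel \<Otimes>\<^sub>M lborel) (\<lambda>(t, z). F t z)"
  proof (rule lborel_pair.Fubini_integrable)
    show "(\<lambda>(t, z). F t z) \<in> borel_measurable (lborel \<Otimes>\<^sub>M lborel)" by (rule Fm)
    have "(\<lambda>t. LINT z|lborel. norm (case (t, z) of (t, z) \<Rightarrow> F t z)) = (\<lambda>t. sqrt pi * cmod (Phi \<kappa> 0 0 t))"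
    proof
      fix t
      have "(LINT z|lborel. norm (case (t, z) of (t, z) \<Rightarrow> F t z)) = (LINT z|lborel. cmod (Phi \<kappa> 0 0 t) * exp (- z\<^sup>2))"
        by (simp add: F_def norm_mult norm_Phi0)
      also have "\<dots> = sqrt pi * cmod (Phi \<kappa> 0 0 t)" using integral_gauss by simp
      finally show "(LINT z|lborel. norm (case (t, z) of (t, z) \<Rightarrow> F t z)) = sqrt pi * cmod (Phi \<kappa> 0 0 t)" .
    qed
    then show "integrable lborel (\<lambda>t. LINT z|lborel. norm (case (t, z) of (t, z) \<Rightarrow> F t z))"
      using Phi_integrable[OF k, of 0 0] by simp
    show "AE t in lborel. integrable lborel (\<lambda>z. case (t, z) of (t, z) \<Rightarrow> F t z)"
    proof (rule AE_I2)
      fix t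
      have m: "(\<lambda>z. F t z) \<in> borel_measurable borel"
        by (rule borel_measurable_continuous_onI) (unfold F_def Phi_def, intro continuous_intros)
      show "integrable lborel (\<lambda>z. case (t, z) of (t, z) \<Rightarrow> F t z)"
      proof (rule Bochner_Integration.integrable_bound[of _ "\<lambda>z. cmod (Phi \<kappa> 0 0 t) * exp (- z\<^sup>2)"])
        show "integrable lborel (\<lambda>z. cmod (Phi \<kappa> 0 0 t) * exp (- z\<^sup>2))" using integrable_gauss by simp
        show "(\<lambda>z. case (t, z) of (t, z) \<Rightarrow> F t z) \<in> borel_measurable lborel" using m by simp
        show "AE z in lborel. norm (case (t, z) of (t, z) \<Rightarrow> F t z) \<le> norm (cmod (Phi \<kappa> 0 0 t) * exp (- z\<^sup>2))"
          by (rule AE_I2) (simp add: F_def norm_mult norm_Phi0)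
      qed
    qed
  qed
  have "(LINT z|lborel. LINT t|lborel. F t z) = (LINT t|lborel. LINT z|lborel. F t z)"
    using lborel_pair.Fubini_integral[OF intF] .
  moreover have "(LINT z|lborel. LINT t|lborel. F t z) = (LINT z|lborel. GG \<kappa> 0 z * of_real (exp (- z\<^sup>2)))"
    unfolding F_def GG_def by simp
  moreover have "(LINT z|lborel. F t z) = of_real (sqrt pi) * of_real (indicator {0<..} t * (psi \<kappa> t * exp (- (\<kappa> * aa t)\<^sup>2 / 4)))" for t
  proof -
    have "(LINT z|lborel. F t z) = of_real (indicator {0<..} t * psi \<kappa> t) * (LINT z|lborel. exp (\<i> * of_real (\<kappa> * aa t) * of_real z) * of_real (exp (- z\<^sup>2)))"
      unfolding F_def Phi_def by (simp add: mult.assoc)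
    also have "\<dots> = of_real (indicator {0<..} t * psi \<kappa> t) * of_real (sqrt pi * exp (- (\<kappa> * aa t)\<^sup>2 / 4))"
      unfolding gauss_char ..
    finally show ?thesis by (simp add: mult_ac)
  qed
  ultimately show ?thesis by (simp add: integral_complex_of_real[symmetric])
qed

lemma series_int:
  fixes c :: real assumes c: "c > 0"
  shows "(LINT t|lborel. indicator {0<..} t * (exp (- c * t) * exp (- c * exp (- t))))
       = (\<Sum>n. (- c) ^ n / (fact n * (real n + c)))"
proof -
  define f where "f n t = indicator {0<..} t * ((- c) ^ n / fact n * exp (- (real n + c) * t))" for n t
  have ed: "set_integrable lborel {0<..} (\<lambda>t. exp (- (real n + c) * t))"
     "set_lebesgue_integral lborel {0<..} (\<lambda>t. exp (- (real n + c) * t)) = 1 / (real n + c)" for n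
    using exp_decay[of "real n + c"] c by auto
  have fint: "integrable lborel (f n)" for n
  proof -
    have "integrable lborel (\<lambda>t. (- c) ^ n / fact n * (indicator {0<..} t * exp (- (real n + c) * t)))"
      using ed(1)[of n] unfolding set_integrable_def by simp
    then show ?thesis unfolding f_def by (simp add: ac_simps)
  qed
  have fI: "integral\<^sup>L lborel (f n) = (- c) ^ n / (fact n * (real n + c))" for n
  proof -
    have "f n = (\<lambda>t. (- c) ^ n / fact n * (indicator {0<..} t * exp (- (real n + c) * t)))"
      unfolding f_def by (simp add: fun_eq_iff ac_simps)
    then have "integral\<^sup>L lborel (f n) = (- c) ^ n / fact n * (LINT t|lborel. indicator {0<..} t * exp (- (real n + c) * t))"
      by (simp only: integral_mult_right_zero)
    also have "\<dots> = (- c) ^ n / fact n * (1 / (real n + c))"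
      using ed(2)[of n] unfolding set_lebesgue_integral_def by simp
    finally show ?thesis by simp
  qed
  have fN: "(LINT t|lborel. norm (f n t)) = c ^ n / (fact n * (real n + c))" for n
  proof -
    have "(\<lambda>t. norm (f n t)) = (\<lambda>t. c ^ n / fact n * (indicator {0<..} t * exp (- (real n + c) * t)))"
      unfolding f_def using c by (auto simp: fun_eq_iff indicator_def abs_mult power_abs)
    then have "(LINT t|lborel. norm (f n t)) = c ^ n / fact n * (LINT t|lborel. indicator {0<..} t * exp (- (real n + c) * t))"
      by (simp only: integral_mult_right_zero)
    also have "\<dots> = c ^ n / fact n * (1 / (real n + c))"
      using ed(2)[of n] unfolding set_lebesgue_integral_def by simp
    finally show ?thesis by simp
  qed
  have pt: "(\<lambda>n. f n t) sums (indicator {0<..} t * (exp (- c * t) * exp (- c * exp (- t))))" for t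
  proof -
    have "(\<lambda>n. (- c * exp (- t)) ^ n /\<^sub>R fact n) sums exp (- c * exp (- t))" by (rule exp_converges)
    then have "(\<lambda>n. indicator {0<..} t * exp (- c * t) * ((- c * exp (- t)) ^ n /\<^sub>R fact n)) sums
        (indicator {0<..} t * exp (- c * t) * exp (- c * exp (- t)))"
      by (rule sums_mult)
    moreover have "indicator {0<..} t * exp (- c * t) * ((- c * exp (- t)) ^ n /\<^sub>R fact n) = f n t" for n
    proof -
      have "exp (- c * t) * exp (- t) ^ n = exp (- (real n + c) * t)"
        by (simp add: exp_of_nat_mult[symmetric] exp_add[symmetric] algebra_simps)
      then show ?thesis unfolding f_def power_mult_distrib real_scaleR_def
        by (simp add: field_simps)
    qed
    ultimately show ?thesis by (simp add: mult.assoc)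
  qed
  have "(LINT t|lborel. (\<Sum>n. f n t)) = (\<Sum>n. integral\<^sup>L lborel (f n))"
  proof (rule integral_suminf)
    show "integrable lborel (f n)" for n by (rule fint)
    show "AE t in lborel. summable (\<lambda>n. norm (f n t))"
    proof (rule AE_I2)
      fix t
      have "(\<lambda>n. norm (f n t)) = (\<lambda>n. indicator {0<..} t * exp (- c * t) * ((c * exp (- t)) ^ n /\<^sub>R fact n))"
      proof
        fix n
        have "exp (- c * t) * exp (- t) ^ n = exp (- (real n + c) * t)"
          by (simp add: exp_of_nat_mult[symmetric] exp_add[symmetric] algebra_simps)
        then show "norm (f n t) = indicator {0<..} t * exp (- c * t) * ((c * exp (- t)) ^ n /\<^sub>R fact n)"
          unfolding f_def using c by (simp add: abs_mult power_abs power_mult_distrib field_simps indicator_def)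
      qed
      moreover have "summable (\<lambda>n. indicator {0<..} t * exp (- c * t) * ((c * exp (- t)) ^ n /\<^sub>R fact n))"
        by (rule summable_mult) (rule sums_summable[OF exp_converges])
      ultimately show "summable (\<lambda>n. norm (f n t))" by simp
    qed
    show "summable (\<lambda>n. LINT t|lborel. norm (f n t))"
      unfolding fN
    proof (rule summable_comparison_test[of _ "\<lambda>n. (1 / c) * (c ^ n /\<^sub>R fact n)"])
      show "summable (\<lambda>n. (1 / c) * (c ^ n /\<^sub>R fact n))"
        by (rule summable_mult) (rule sums_summable[OF exp_converges])
      show "\<exists>N. \<forall>n\<ge>N. norm (c ^ n / (fact n * (real n + c))) \<le> (1 / c) * (c ^ n /\<^sub>R fact n)"
      proof (intro exI allI impI)
        fix n :: nat
        have "c ^ n / (fact n * (real n + c)) \<le> c ^ n / (fact n * c)"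
          using c by (intro divide_left_mono mult_left_mono) auto
        then show "norm (c ^ n / (fact n * (real n + c))) \<le> (1 / c) * (c ^ n /\<^sub>R fact n)"
          using c by (simp add: field_simps)
      qed
    qed
  qed
  moreover have "(\<lambda>t. (\<Sum>n. f n t)) = (\<lambda>t. indicator {0<..} t * (exp (- c * t) * exp (- c * exp (- t))))"
  proof
    fix t show "(\<Sum>n. f n t) = indicator {0<..} t * (exp (- c * t) * exp (- c * exp (- t)))"
      using sums_unique[OF pt[of t]] by simp
  qed
  ultimately show ?thesis unfolding fI by simp
qed

lemma int_pow:
  fixes x :: real assumes x: "x \<ge> 0"
  shows "(LINT t|lborel. indicator {0..x} t * t ^ m) = x ^ Suc m / real (Suc m)"
proof -
  have d: "((\<lambda>t. t ^ Suc m / real (Suc m)) has_real_derivative t ^ m) (at t)" for t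
    using DERIV_cdivide[OF DERIV_pow[of "Suc m" t], of "real (Suc m)"] by simp
  have "(LBINT t=ereal 0..ereal x. t ^ m) = x ^ Suc m / real (Suc m) - 0 ^ Suc m / real (Suc m)"
  proof (rule interval_integral_FTC_finite)
    show "continuous_on {min 0 x..max 0 x} (\<lambda>t. t ^ m)" by (intro continuous_intros)
    fix t show "((\<lambda>t. t ^ Suc m / real (Suc m)) has_vector_derivative t ^ m) (at t within {min 0 x..max 0 x})"
      using d[of t] unfolding has_real_derivative_iff_has_vector_derivative by (rule has_vector_derivative_at_within)
  qed
  then show ?thesis using x by (simp add: interval_integral_Icc set_lebesgue_integral_def)
qed

lemma erf_series:
  fixes x :: real assumes x: "x > 0"
  shows "(LBINT t=0..x. exp (- t\<^sup>2)) = (\<Sum>n. (-1) ^ n * x ^ (2*n+1) / (fact n * real (2*n+1)))"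
proof -
  define f where "f n t = indicator {0..x} t * ((-1) ^ n / fact n * t ^ (2*n))" for n t
  have fint: "integrable lborel (f n)" for n
  proof -
    have "set_integrable lborel {0..x} (\<lambda>t. (-1) ^ n / fact n * t ^ (2*n))"
      by (rule borel_integrable_atLeastAtMost') (intro continuous_intros)
    then show ?thesis unfolding f_def set_integrable_def by simp
  qed
  have fI: "integral\<^sup>L lborel (f n) = (-1) ^ n * x ^ (2*n+1) / (fact n * real (2*n+1))" for n
  proof -
    have "f n = (\<lambda>t. (-1) ^ n / fact n * (indicator {0..x} t * t ^ (2*n)))"
      unfolding f_def by (simp add: fun_eq_iff ac_simps)
    then have "integral\<^sup>L lborel (f n) = (-1) ^ n / fact n * (LINT t|lborel. indicator {0..x} t * t ^ (2*n))"
      by (simp only: integral_mult_right_zero)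
    also have "\<dots> = (-1) ^ n / fact n * (x ^ Suc (2*n) / real (Suc (2*n)))" using int_pow x by simp
    finally show ?thesis by simp
  qed
  have fN: "(LINT t|lborel. norm (f n t)) = x ^ (2*n+1) / (fact n * real (2*n+1))" for n
  proof -
    have "(\<lambda>t. norm (f n t)) = (\<lambda>t. 1 / fact n * (indicator {0..x} t * t ^ (2*n)))"
      unfolding f_def by (auto simp: fun_eq_iff indicator_def abs_mult power_abs power_mult)
    then have "(LINT t|lborel. norm (f n t)) = 1 / fact n * (LINT t|lborel. indicator {0..x} t * t ^ (2*n))"
      by (simp only: integral_mult_right_zero)
    also have "\<dots> = 1 / fact n * (x ^ Suc (2*n) / real (Suc (2*n)))" using int_pow x by simp
    finally show ?thesis by simp
  qed
  have pt: "(\<lambda>n. f n t) sums (indicator {0..x} t * exp (- t\<^sup>2))" for t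
  proof -
    have "(\<lambda>n. (- t\<^sup>2) ^ n /\<^sub>R fact n) sums exp (- t\<^sup>2)" by (rule exp_converges)
    then have "(\<lambda>n. indicator {0..x} t * ((- t\<^sup>2) ^ n /\<^sub>R fact n)) sums (indicator {0..x} t * exp (- t\<^sup>2))"
      by (rule sums_mult)
    moreover have "indicator {0..x} t * ((- t\<^sup>2) ^ n /\<^sub>R fact n) = f n t" for n
    proof -
      have "(t\<^sup>2) ^ n = t ^ (2*n)" by (simp add: power_mult)
      then show ?thesis unfolding f_def power_minus[of "t\<^sup>2"] real_scaleR_def by (simp add: field_simps)
    qed
    ultimately show ?thesis by simp
  qed
  have "(LINT t|lborel. (\<Sum>n. f n t)) = (\<Sum>n. integral\<^sup>L lborel (f n))"
  proof (rule integral_suminf)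
    show "integrable lborel (f n)" for n by (rule fint)
    show "AE t in lborel. summable (\<lambda>n. norm (f n t))"
    proof (rule AE_I2)
      fix t
      have "(\<lambda>n. norm (f n t)) = (\<lambda>n. indicator {0..x} t * ((t\<^sup>2) ^ n /\<^sub>R fact n))"
        unfolding f_def by (auto simp: fun_eq_iff indicator_def abs_mult power_abs power_mult divide_inverse)
      moreover have "summable (\<lambda>n. indicator {0..x} t * ((t\<^sup>2) ^ n /\<^sub>R fact n))"
        by (rule summable_mult) (rule sums_summable[OF exp_converges])
      ultimately show "summable (\<lambda>n. norm (f n t))" by simp
    qed
    show "summable (\<lambda>n. LINT t|lborel. norm (f n t))"
      unfolding fN
    proof (rule summable_comparison_test[of _ "\<lambda>n. x * ((x\<^sup>2) ^ n /\<^sub>R fact n)"])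
      show "summable (\<lambda>n. x * ((x\<^sup>2) ^ n /\<^sub>R fact n))"
        by (rule summable_mult) (rule sums_summable[OF exp_converges])
      show "\<exists>N. \<forall>n\<ge>N. norm (x ^ (2*n+1) / (fact n * real (2*n+1))) \<le> x * ((x\<^sup>2) ^ n /\<^sub>R fact n)"
      proof (intro exI allI impI)
        fix n :: nat
        have "x ^ (2*n+1) / (fact n * real (2*n+1)) \<le> x ^ (2*n+1) / (fact n * 1)"
          using x by (intro divide_left_mono mult_left_mono) auto
        then show "norm (x ^ (2*n+1) / (fact n * real (2*n+1))) \<le> x * ((x\<^sup>2) ^ n /\<^sub>R fact n)"
        proof -
          have xx: "(x\<^sup>2) ^ n = (x ^ n)\<^sup>2" by (metis power_mult mult.commute)
          show ?thesis using x \<open>x ^ (2*n+1) / (fact n * real (2*n+1)) \<le> x ^ (2*n+1) / (fact n * 1)\<close>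
            unfolding xx by (simp add: field_simps power_mult)
        qed
      qed
    qed
  qed
  moreover have "(\<lambda>t. (\<Sum>n. f n t)) = (\<lambda>t. indicator {0..x} t * exp (- t\<^sup>2))"
  proof
    fix t show "(\<Sum>n. f n t) = indicator {0..x} t * exp (- t\<^sup>2)"
      using sums_unique[OF pt[of t]] by simp
  qed
  moreover have "(LBINT t=0..x. exp (- t\<^sup>2)) = (LINT t|lborel. indicator {0..x} t * exp (- t\<^sup>2))"
    unfolding zero_ereal_def using x by (simp add: interval_integral_Icc set_lebesgue_integral_def)
  ultimately show ?thesis unfolding fI by simp
qed

lemma psi_combine:
  "psi \<kappa> t * exp (- (\<kappa> * aa t)\<^sup>2 / 4) = exp (\<kappa>\<^sup>2 / 2) * (exp (- (\<kappa>\<^sup>2 / 2) * t) * exp (- (\<kappa>\<^sup>2 / 2) * exp (- t)))"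
proof -
  have e2: "exp (- 2 * t) = exp (- t) * exp (- t)" by (simp add: exp_add[symmetric])
  have "- (\<kappa>\<^sup>2) * VV t / 2 + - (\<kappa> * aa t)\<^sup>2 / 4 = \<kappa>\<^sup>2 / 2 + (- (\<kappa>\<^sup>2 / 2) * t + - (\<kappa>\<^sup>2 / 2) * exp (- t))"
  proof -
    have gen: "- (\<kappa>\<^sup>2) * (t - 2 * (1 - e) + (1 - e * e) / 2) / 2 + - (\<kappa> * (1 - e))\<^sup>2 / 4
        = \<kappa>\<^sup>2 / 2 + (- (\<kappa>\<^sup>2 / 2) * t + - (\<kappa>\<^sup>2 / 2) * e)" for e
      by (simp add: power2_eq_square field_simps)
    show ?thesis unfolding VV_def aa_def e2 by (rule gen)
  qed
  then show ?thesis unfolding psi_def by (simp add: exp_add[symmetric])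
qed

lemma MZ_value:
  assumes k: "k \<noteq> 0"
  shows "MZ_form_exp l k = complex_of_real (exp ((real_of_int k)\<^sup>2 / 2) * (if k = l then 1 else 0)
             * (\<Sum>n. (-1) ^ n * (real_of_int k) ^ (2*n)
                    / ((real n + (real_of_int k)\<^sup>2 / 2) * 2 ^ n * fact n)))"
proof -
  define \<kappa> where "\<kappa> = real_of_int k"
  have k': "\<kappa> \<noteq> 0" unfolding \<kappa>_def using k by simp
  define c where "c = \<kappa>\<^sup>2 / 2"
  have c: "c > 0" unfolding c_def using k' by simp
  define T where "T = (LINT t|lborel. indicator {0<..} t * (psi \<kappa> t * exp (- (\<kappa> * aa t)\<^sup>2 / 4)))"
  have "(LINT z|lborel. GG \<kappa> 0 z * of_real (exp (- z\<^sup>2) / sqrt pi))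
      = (LINT z|lborel. (GG \<kappa> 0 z * of_real (exp (- z\<^sup>2))) * of_real (1 / sqrt pi))"
    by (simp add: divide_inverse mult.assoc)
  also have "\<dots> = (LINT z|lborel. GG \<kappa> 0 z * of_real (exp (- z\<^sup>2))) * of_real (1 / sqrt pi)"
    by (rule integral_mult_left_zero)
  also have "\<dots> = of_real T"
  proof -
    have one: "(of_real (sqrt pi) :: complex) * of_real (1 / sqrt pi) = 1" by (simp flip: of_real_mult)
    have "of_real (sqrt pi) * of_real T * of_real (1 / sqrt pi) = (of_real T :: complex) * (of_real (sqrt pi) * of_real (1 / sqrt pi))"
      by (simp only: mult_ac)
    then show ?thesis unfolding GG_gauss[OF k'] T_def[symmetric] one by simp
  qed
  finally have A: "(LINT z|lborel. GG \<kappa> 0 z * of_real (exp (- z\<^sup>2) / sqrt pi)) = of_real T" .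
  have "T = (LINT t|lborel. exp c * (indicator {0<..} t * (exp (- c * t) * exp (- c * exp (- t)))))"
    unfolding T_def psi_combine c_def by (simp add: ac_simps)
  also have "\<dots> = exp c * (\<Sum>n. (- c) ^ n / (fact n * (real n + c)))"
    unfolding integral_mult_right_zero series_int[OF c] ..
  also have "(\<lambda>n. (- c) ^ n / (fact n * (real n + c))) = (\<lambda>n. (-1) ^ n * \<kappa> ^ (2*n) / ((real n + \<kappa>\<^sup>2 / 2) * 2 ^ n * fact n))"
  proof
    fix n
    have "(- c) ^ n = (-1) ^ n * \<kappa> ^ (2*n) / 2 ^ n"
      unfolding c_def by (simp add: power_minus[of "\<kappa>\<^sup>2 / 2"] power_divide power_mult)
    then have "(- c) ^ n / (fact n * (real n + c)) = ((-1) ^ n * \<kappa> ^ (2*n) / 2 ^ n) / (fact n * (real n + \<kappa>\<^sup>2 / 2))"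
      unfolding c_def by (simp only:)
    also have "\<dots> = (-1) ^ n * \<kappa> ^ (2*n) / ((real n + \<kappa>\<^sup>2 / 2) * 2 ^ n * fact n)"
      by (simp only: divide_divide_eq_left mult_ac)
    finally show "(- c) ^ n / (fact n * (real n + c)) = (-1) ^ n * \<kappa> ^ (2*n) / ((real n + \<kappa>\<^sup>2 / 2) * 2 ^ n * fact n)" .
  qed
  finally have B: "T = exp (\<kappa>\<^sup>2 / 2) * (\<Sum>n. (-1) ^ n * \<kappa> ^ (2*n) / ((real n + \<kappa>\<^sup>2 / 2) * 2 ^ n * fact n))"
    unfolding c_def .
  have AB: "(LINT z|lborel. GG \<kappa> 0 z * of_real (exp (- z\<^sup>2) / sqrt pi)) =
     of_real (exp (\<kappa>\<^sup>2 / 2) * (\<Sum>n. (-1) ^ n * \<kappa> ^ (2*n) / ((real n + \<kappa>\<^sup>2 / 2) * 2 ^ n * fact n)))"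
    using A unfolding B .
  have M: "MZ_form_exp l k = (if k = l then 1 else 0) * (LINT z|lborel. GG \<kappa> 0 z * of_real (exp (- z\<^sup>2) / sqrt pi))"
    using MZ_formula[OF k, of l] unfolding \<kappa>_def .
  show ?thesis unfolding M AB \<kappa>_def[symmetric] by (cases "k = l") simp_all
qed

lemma erf_part: "MZ_form_exp 1 1 = complex_of_real (sqrt (2 * exp 1 * pi) * erf (1 / sqrt 2))"
proof -
  define a where "a n = (-1) ^ n * (1::real) ^ (2*n) / ((real n + 1\<^sup>2 / 2) * 2 ^ n * fact n)" for n :: nat
  define b where "b n = (-1) ^ n * (1 / sqrt 2) ^ (2*n+1) / (fact n * real (2*n+1))" for n :: nat
  have pw: "(1 / sqrt 2) ^ (2*n+1) = (1/2) ^ n * (1 / sqrt 2)" for n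
  proof -
    have "(1 / sqrt 2) ^ (2*n+1) = ((1 / sqrt 2)\<^sup>2) ^ n * (1 / sqrt 2)" by (simp add: power_mult power_add)
    also have "(1 / sqrt (2::real))\<^sup>2 = 1/2" by (simp add: power_divide)
    finally show ?thesis .
  qed
  have ab: "a n = (2 * sqrt 2) * b n" for n
  proof -
    have bn: "b n = (-1) ^ n * (1/2) ^ n * (1 / sqrt 2) / (fact n * real (2*n+1))" unfolding b_def pw by (simp only: mult.assoc)
    have gen: "2 * s * (X * r / D) = 2 * (s * r) * (X / D)" for s r X D :: real
      by (simp add: divide_inverse mult_ac)
    have "(2 * sqrt 2) * b n = 2 * (sqrt 2 * (1 / sqrt 2)) * ((-1) ^ n * (1/2) ^ n / (fact n * real (2*n+1)))"
      unfolding bn by (rule gen)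
    also have "sqrt 2 * (1 / sqrt 2) = (1::real)" by simp
    finally have "(2 * sqrt 2) * b n = 2 * ((-1) ^ n * (1/2) ^ n / (fact n * real (2*n+1)))" by simp
    moreover have "a n = 2 * ((-1) ^ n * (1/2) ^ n / (fact n * real (2*n+1)))"
      unfolding a_def by (simp add: field_simps power_one_over)
    ultimately show ?thesis by simp
  qed
  have sb: "summable b"
  proof (rule summable_comparison_test[of _ "\<lambda>n. (1/2) ^ n /\<^sub>R fact n"])
    show "summable (\<lambda>n. (1/2::real) ^ n /\<^sub>R fact n)" by (rule sums_summable[OF exp_converges])
    show "\<exists>N. \<forall>n\<ge>N. norm (b n) \<le> (1/2) ^ n /\<^sub>R fact n"
    proof (intro exI allI impI)
      fix n :: nat
      have "norm (b n) = (1/2) ^ n * (1 / sqrt 2) / (fact n * real (2*n+1))"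
        unfolding b_def pw by (simp add: abs_mult power_abs)
      also have "\<dots> \<le> (1/2) ^ n * 1 / (fact n * 1)"
        by (intro frac_le mult_left_mono mult_mono) (auto simp: real_sqrt_ge_one)
      also have "(1/2) ^ n * 1 / (fact n * 1) = (1/2::real) ^ n /\<^sub>R fact n"
        by (simp only: real_scaleR_def divide_inverse mult.commute mult_1_right mult_1_left)
      finally show "norm (b n) \<le> (1/2) ^ n /\<^sub>R fact n" .
    qed
  qed
  have sa: "(\<Sum>n. a n) = (2 * sqrt 2) * (\<Sum>n. b n)"
    unfolding ab by (rule suminf_mult[OF sb])
  have erf: "erf (1 / sqrt 2) = 2 / sqrt pi * (\<Sum>n. b n)"
    unfolding erf_def b_def by (subst erf_series) auto
  have e: "exp (1/2 :: real) = sqrt (exp 1)"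
  proof -
    have "exp (1::real) = (exp (1/2))\<^sup>2" by (simp add: power2_eq_square exp_add[symmetric])
    then show ?thesis by simp
  qed
  have "MZ_form_exp 1 1 = complex_of_real (exp ((real_of_int 1)\<^sup>2 / 2) * (if (1::int) = 1 then 1 else 0) * (\<Sum>n. a n))"
    unfolding a_def using MZ_value[of 1 1] by simp
  also have "exp ((real_of_int 1)\<^sup>2 / 2) * (if (1::int) = 1 then 1 else 0) * (\<Sum>n. a n)
      = sqrt (2 * exp 1 * pi) * erf (1 / sqrt 2)"
    unfolding sa erf by (simp add: e real_sqrt_mult)
  finally show ?thesis .
qed

theorem mainTheorem7:
  fixes k l :: int
  assumes "k \<noteq> 0" and "l \<noteq> 0"
  shows "(MZ_form_exp l k =
           complex_of_real (exp ((real_of_int k)\<^sup>2 / 2) * (if k = l then 1 else 0)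
             * (\<Sum>n. (-1) ^ n * (real_of_int k) ^ (2*n)
                    / ((real n + (real_of_int k)\<^sup>2 / 2) * 2 ^ n * fact n))))
         \<and> MZ_form_exp 1 1 = complex_of_real (sqrt (2 * exp 1 * pi) * erf (1 / sqrt 2))"
  using MZ_value[OF assms(1), of l] erf_part by simp

end
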